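(* Let $k$ be a commutative ring over which every finitely generated projective module is free, and let $A$ be a $k$-linear semi-Hopf category (i.e. a semi-Hopf $\mathcal V$-category for $\mathcal V=\mathsf{Mod}_k$) with object set $X$ such that each $A_{x,y}$ is finitely generated projective (hence free of finite rank), and such that for all $x,y\in X$ with $A_{x,y}\neq0$ the ranks of $A_{x,y}$ and $A_{y,y}$ coincide. If $s=\{s_{xy}\}$ is a right antipode of $A$, then $s$ is also a left antipode, hence an antipode, and $A$ is a Hopf category.
   Context: $\mathsf{Mod}_k$ has the usual tensor product and symmetry. A $k$-linear category $A$ with object set $X$: $k$-modules $A_{x,y}$, $k$-bilinear compositions $m_{xyz}\colon A_{x,y}\otimes A_{y,z}\to A_{x,z}$ and units $j_x\colon k\to A_{x,x}$, associative and unital. Semi-Hopf: each $A_{x,y}$ is a $k$-coalgebra $(\delta_{xy},\epsilon_{xy})$ and all $m_{xyz},j_x$ are coalgebra morphisms. Right antipode: $k$-linear maps $s_{xy}\colon A_{x,y}\to A_{y,x}$ with $m_{xyx}\circ(1\otimes s_{xy})\circ\delta_{xy}=j_x\circ\epsilon_{xy}$ (in Sweedler notation $a_{(1)}s_{xy}(a_{(2)})=\epsilon_{xy}(a)1_x$); left antipode: $m_{yxy}\circ(s_{xy}\otimes1)\circ\delta_{xy}=j_y\circ\epsilon_{xy}$; antipode: both. *)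

theory Defs
  imports Main
begin

record ('k, 'a) kmod =
  mcarrier :: "'a set"
  madd :: "'a \<Rightarrow> 'a \<Rightarrow> 'a"
  mzero :: 'a
  msmult :: "'k \<Rightarrow> 'a \<Rightarrow> 'a"

definition is_kmodule :: "('k::comm_ring_1, 'a) kmod \<Rightarrow> bool" where
  "is_kmodule M \<longleftrightarrow>
     mzero M \<in> mcarrier M
   \<and> (\<forall>u\<in>mcarrier M. \<forall>v\<in>mcarrier M. madd M u v \<in> mcarrier M)
   \<and> (\<forall>c. \<forall>v\<in>mcarrier M. msmult M c v \<in> mcarrier M)
   \<and> (\<forall>u\<in>mcarrier M. \<forall>v\<in>mcarrier M. \<forall>w\<in>mcarrier M.
        madd M (madd M u v) w = madd M u (madd M v w))
   \<and> (\<forall>u\<in>mcarrier M. \<forall>v\<in>mcarrier M. madd M u v = madd M v u)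
   \<and> (\<forall>v\<in>mcarrier M. madd M (mzero M) v = v)
   \<and> (\<forall>v\<in>mcarrier M. \<exists>w\<in>mcarrier M. madd M v w = mzero M)
   \<and> (\<forall>a. \<forall>u\<in>mcarrier M. \<forall>v\<in>mcarrier M.
        msmult M a (madd M u v) = madd M (msmult M a u) (msmult M a v))
   \<and> (\<forall>a b. \<forall>v\<in>mcarrier M. msmult M (a + b) v = madd M (msmult M a v) (msmult M b v))
   \<and> (\<forall>a b. \<forall>v\<in>mcarrier M. msmult M (a * b) v = msmult M a (msmult M b v))
   \<and> (\<forall>v\<in>mcarrier M. msmult M 1 v = v)"

definition msum :: "('k, 'a) kmod \<Rightarrow> 'a list \<Rightarrow> 'a" where
  "msum M vs = foldr (madd M) vs (mzero M)"

definition klinear :: "('k, 'a) kmod \<Rightarrow> ('k, 'b) kmod \<Rightarrow> ('a \<Rightarrow> 'b) \<Rightarrow> bool" where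
  "klinear M N f \<longleftrightarrow>
     (\<forall>v\<in>mcarrier M. f v \<in> mcarrier N)
   \<and> (\<forall>u\<in>mcarrier M. \<forall>v\<in>mcarrier M. f (madd M u v) = madd N (f u) (f v))
   \<and> (\<forall>c. \<forall>v\<in>mcarrier M. f (msmult M c v) = msmult N c (f v))"

definition kpow :: "nat \<Rightarrow> ('k::comm_ring_1, nat \<Rightarrow> 'k) kmod" where
  "kpow n = \<lparr> mcarrier = {f. \<forall>j\<ge>n. f j = 0},
              madd = (\<lambda>f g j. f j + g j),
              mzero = (\<lambda>j. 0),
              msmult = (\<lambda>c f j. c * f j) \<rparr>"

text \<open>Finitely generated projective = direct summand (retract) of some k^n.\<close>
definition fg_projective :: "('k::comm_ring_1, 'a) kmod \<Rightarrow> bool" where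
  "fg_projective M \<longleftrightarrow>
     (\<exists>n i p. klinear M (kpow n) i \<and> klinear (kpow n) M p \<and> (\<forall>v\<in>mcarrier M. p (i v) = v))"

definition is_basis :: "('k::comm_ring_1, 'a) kmod \<Rightarrow> (nat \<Rightarrow> 'a) \<Rightarrow> nat \<Rightarrow> bool" where
  "is_basis M b n \<longleftrightarrow>
     (\<forall>i<n. b i \<in> mcarrier M)
   \<and> (\<forall>v\<in>mcarrier M. \<exists>!c. (\<forall>i\<ge>n. c i = 0) \<and>
          v = msum M (map (\<lambda>i. msmult M (c i) (b i)) [0..<n]))"

definition has_rank :: "('k::comm_ring_1, 'a) kmod \<Rightarrow> nat \<Rightarrow> bool" where
  "has_rank M n \<longleftrightarrow> (\<exists>b. is_basis M b n)"

definition is_free :: "('k::comm_ring_1, 'a) kmod \<Rightarrow> bool" where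
  "is_free M \<longleftrightarrow> (\<exists>n. has_rank M n)"

text \<open>It suffices (and is
  equivalent) to quantify over modules whose elements are functions nat => k,
  since every f.g. projective module is isomorphic to a submodule of k^n.\<close>
definition fgp_free_ring :: "'k::comm_ring_1 itself \<Rightarrow> bool" where
  "fgp_free_ring _ \<longleftrightarrow>
     (\<forall>M :: ('k, nat \<Rightarrow> 'k) kmod. is_kmodule M \<and> fg_projective M \<longrightarrow> is_free M)"

text \<open>Elements of the n-fold tensor power are represented by formal sums
  (lists) of words of length n, a word [a1,...,an] standing for a1 \<otimes> ... \<otimes> an.
  (Scalars are absorbed into the factors.)  Two formal sums are equal in the
  tensor power iff their difference in the free k-module on words lies in the
  span of the multilinearity relations.\<close>

definition ind :: "'a list \<Rightarrow> 'a list \<Rightarrow> 'k::comm_ring_1" where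
  "ind w z = (if z = w then 1 else 0)"

definition fsum :: "'a list list \<Rightarrow> 'a list \<Rightarrow> 'k::comm_ring_1" where
  "fsum L z = of_nat (count_list L z)"

definition tensor_rel :: "('k::comm_ring_1, 'a) kmod \<Rightarrow> nat \<Rightarrow> ('a list \<Rightarrow> 'k) set" where
  "tensor_rel M n =
     {(\<lambda>z. ind (u @ madd M a b # w) z - ind (u @ a # w) z - ind (u @ b # w) z) | u w a b.
        set u \<subseteq> mcarrier M \<and> set w \<subseteq> mcarrier M \<and> a \<in> mcarrier M \<and> b \<in> mcarrier M
        \<and> length u + length w + 1 = n}
   \<union> {(\<lambda>z. ind (u @ msmult M c a # w) z - c * ind (u @ a # w) z) | u w a c.
        set u \<subseteq> mcarrier M \<and> set w \<subseteq> mcarrier M \<and> a \<in> mcarrier M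
        \<and> length u + length w + 1 = n}"

definition tensor_span :: "('k::comm_ring_1, 'a) kmod \<Rightarrow> nat \<Rightarrow> ('a list \<Rightarrow> 'k) set" where
  "tensor_span M n =
     {f. \<exists>(N::nat) c r. (\<forall>i<N. r i \<in> tensor_rel M n) \<and> f = (\<lambda>z. \<Sum>i<N. c i * r i z)}"

definition tensor_eq :: "('k::comm_ring_1, 'a) kmod \<Rightarrow> nat \<Rightarrow> 'a list list \<Rightarrow> 'a list list \<Rightarrow> bool" where
  "tensor_eq M n L1 L2 \<longleftrightarrow>
     (\<forall>w\<in>set L1 \<union> set L2. length w = n \<and> set w \<subseteq> mcarrier M)
   \<and> (\<lambda>z. fsum L1 z - fsum L2 z :: 'k) \<in> tensor_span M n"

definition tensor2_eq :: "('k::comm_ring_1, 'a) kmod \<Rightarrow> ('a \<times> 'a) list \<Rightarrow> ('a \<times> 'a) list \<Rightarrow> bool" where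
  "tensor2_eq M L1 L2 \<longleftrightarrow>
     tensor_eq M 2 (map (\<lambda>(u, v). [u, v]) L1) (map (\<lambda>(u, v). [u, v]) L2)"

text \<open>delta a is a formal sum representing the element of M \<otimes> M (Sweedler:
  a_(1) \<otimes> a_(2)); eps is the counit.\<close>
definition coalgebra :: "('k::comm_ring_1, 'a) kmod \<Rightarrow> ('a \<Rightarrow> ('a \<times> 'a) list) \<Rightarrow> ('a \<Rightarrow> 'k) \<Rightarrow> bool" where
  "coalgebra M delta eps \<longleftrightarrow>
     (\<forall>a\<in>mcarrier M. set (delta a) \<subseteq> mcarrier M \<times> mcarrier M)
   \<and> (\<forall>a\<in>mcarrier M. \<forall>b\<in>mcarrier M. tensor2_eq M (delta (madd M a b)) (delta a @ delta b))
   \<and> (\<forall>c. \<forall>a\<in>mcarrier M. tensor2_eq M (delta (msmult M c a))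
          (map (\<lambda>(u, v). (msmult M c u, v)) (delta a)))
   \<and> (\<forall>a\<in>mcarrier M. \<forall>b\<in>mcarrier M. eps (madd M a b) = eps a + eps b)
   \<and> (\<forall>c. \<forall>a\<in>mcarrier M. eps (msmult M c a) = c * eps a)
   \<and> (\<forall>a\<in>mcarrier M. tensor_eq M 3
          (concat (map (\<lambda>(u, v). map (\<lambda>(p, q). [p, q, v]) (delta u)) (delta a)))
          (concat (map (\<lambda>(u, v). map (\<lambda>(p, q). [u, p, q]) (delta v)) (delta a))))
   \<and> (\<forall>a\<in>mcarrier M. msum M (map (\<lambda>(u, v). msmult M (eps u) v) (delta a)) = a)
   \<and> (\<forall>a\<in>mcarrier M. msum M (map (\<lambda>(u, v). msmult M (eps v) u) (delta a)) = a)"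

text \<open>Object set X; hom-modules A x y; composition m x y z : A x y \<times> A y z \<rightarrow> A x z
  (bilinear, i.e. a linear map on A x y \<otimes> A y z); unit j x = j_x(1) \<in> A x x;
  each A x y a coalgebra (delta x y, eps x y), with m and j coalgebra morphisms.\<close>
definition semi_hopf_category ::
  "'x set \<Rightarrow> ('x \<Rightarrow> 'x \<Rightarrow> ('k::comm_ring_1, 'a) kmod) \<Rightarrow> ('x \<Rightarrow> 'x \<Rightarrow> 'x \<Rightarrow> 'a \<Rightarrow> 'a \<Rightarrow> 'a)
    \<Rightarrow> ('x \<Rightarrow> 'a) \<Rightarrow> ('x \<Rightarrow> 'x \<Rightarrow> 'a \<Rightarrow> ('a \<times> 'a) list) \<Rightarrow> ('x \<Rightarrow> 'x \<Rightarrow> 'a \<Rightarrow> 'k) \<Rightarrow> bool" where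
  "semi_hopf_category X A m j delta eps \<longleftrightarrow>
     (\<forall>x\<in>X. \<forall>y\<in>X. is_kmodule (A x y) \<and> coalgebra (A x y) (delta x y) (eps x y))
   \<and> (\<forall>x\<in>X. \<forall>y\<in>X. \<forall>z\<in>X.
        (\<forall>a\<in>mcarrier (A x y). \<forall>b\<in>mcarrier (A y z). m x y z a b \<in> mcarrier (A x z))
      \<and> (\<forall>a\<in>mcarrier (A x y). \<forall>a'\<in>mcarrier (A x y). \<forall>b\<in>mcarrier (A y z).
           m x y z (madd (A x y) a a') b = madd (A x z) (m x y z a b) (m x y z a' b))
      \<and> (\<forall>a\<in>mcarrier (A x y). \<forall>b\<in>mcarrier (A y z). \<forall>b'\<in>mcarrier (A y z).
           m x y z a (madd (A y z) b b') = madd (A x z) (m x y z a b) (m x y z a b'))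
      \<and> (\<forall>c. \<forall>a\<in>mcarrier (A x y). \<forall>b\<in>mcarrier (A y z).
           m x y z (msmult (A x y) c a) b = msmult (A x z) c (m x y z a b)
         \<and> m x y z a (msmult (A y z) c b) = msmult (A x z) c (m x y z a b)))
   \<and> (\<forall>x\<in>X. j x \<in> mcarrier (A x x))
   \<and> (\<forall>x\<in>X. \<forall>y\<in>X. \<forall>z\<in>X. \<forall>w\<in>X.
        \<forall>a\<in>mcarrier (A x y). \<forall>b\<in>mcarrier (A y z). \<forall>c\<in>mcarrier (A z w).
          m x z w (m x y z a b) c = m x y w a (m y z w b c))
   \<and> (\<forall>x\<in>X. \<forall>y\<in>X. \<forall>a\<in>mcarrier (A x y). m x x y (j x) a = a \<and> m x y y a (j y) = a)
   \<and> (\<forall>x\<in>X. \<forall>y\<in>X. \<forall>z\<in>X. \<forall>a\<in>mcarrier (A x y). \<forall>b\<in>mcarrier (A y z).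
          tensor2_eq (A x z) (delta x z (m x y z a b))
             (concat (map (\<lambda>(u, v). map (\<lambda>(u', v'). (m x y z u u', m x y z v v')) (delta y z b))
                (delta x y a)))
        \<and> eps x z (m x y z a b) = eps x y a * eps y z b)
   \<and> (\<forall>x\<in>X. tensor2_eq (A x x) (delta x x (j x)) [(j x, j x)] \<and> eps x x (j x) = 1)"

definition right_antipode ::
  "'x set \<Rightarrow> ('x \<Rightarrow> 'x \<Rightarrow> ('k::comm_ring_1, 'a) kmod) \<Rightarrow> ('x \<Rightarrow> 'x \<Rightarrow> 'x \<Rightarrow> 'a \<Rightarrow> 'a \<Rightarrow> 'a)
    \<Rightarrow> ('x \<Rightarrow> 'a) \<Rightarrow> ('x \<Rightarrow> 'x \<Rightarrow> 'a \<Rightarrow> ('a \<times> 'a) list) \<Rightarrow> ('x \<Rightarrow> 'x \<Rightarrow> 'a \<Rightarrow> 'k)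
    \<Rightarrow> ('x \<Rightarrow> 'x \<Rightarrow> 'a \<Rightarrow> 'a) \<Rightarrow> bool" where
  "right_antipode X A m j delta eps s \<longleftrightarrow>
     (\<forall>x\<in>X. \<forall>y\<in>X. klinear (A x y) (A y x) (s x y)
        \<and> (\<forall>a\<in>mcarrier (A x y).
             msum (A x x) (map (\<lambda>(u, v). m x y x u (s x y v)) (delta x y a))
               = msmult (A x x) (eps x y a) (j x)))"

definition left_antipode ::
  "'x set \<Rightarrow> ('x \<Rightarrow> 'x \<Rightarrow> ('k::comm_ring_1, 'a) kmod) \<Rightarrow> ('x \<Rightarrow> 'x \<Rightarrow> 'x \<Rightarrow> 'a \<Rightarrow> 'a \<Rightarrow> 'a)
    \<Rightarrow> ('x \<Rightarrow> 'a) \<Rightarrow> ('x \<Rightarrow> 'x \<Rightarrow> 'a \<Rightarrow> ('a \<times> 'a) list) \<Rightarrow> ('x \<Rightarrow> 'x \<Rightarrow> 'a \<Rightarrow> 'k)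
    \<Rightarrow> ('x \<Rightarrow> 'x \<Rightarrow> 'a \<Rightarrow> 'a) \<Rightarrow> bool" where
  "left_antipode X A m j delta eps s \<longleftrightarrow>
     (\<forall>x\<in>X. \<forall>y\<in>X. klinear (A x y) (A y x) (s x y)
        \<and> (\<forall>a\<in>mcarrier (A x y).
             msum (A y y) (map (\<lambda>(u, v). m y x y (s x y u) v) (delta x y a))
               = msmult (A y y) (eps x y a) (j y)))"

definition is_antipode where
  "is_antipode X A m j delta eps s \<longleftrightarrow>
     right_antipode X A m j delta eps s \<and> left_antipode X A m j delta eps s"

definition hopf_category where
  "hopf_category X A m j delta eps \<longleftrightarrow>
     semi_hopf_category X A m j delta eps \<and> (\<exists>s. is_antipode X A m j delta eps s)"

end

theory Submission
  imports Defs "Jordan_Normal_Form.Determinant"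
begin


lemma kmD_1: assumes "is_kmodule M" shows "mzero M \<in> mcarrier M"
  using assms unfolding is_kmodule_def by auto

lemma kmD_2: assumes "is_kmodule M" shows "\<And>u v. u \<in> mcarrier M \<Longrightarrow> v \<in> mcarrier M \<Longrightarrow> madd M u v \<in> mcarrier M"
  using assms unfolding is_kmodule_def by auto

lemma kmD_3: assumes "is_kmodule M" shows "\<And>c v. v \<in> mcarrier M \<Longrightarrow> msmult M c v \<in> mcarrier M"
  using assms unfolding is_kmodule_def by auto

lemma kmD_4: assumes "is_kmodule M" shows "\<And>u v w. u \<in> mcarrier M \<Longrightarrow> v \<in> mcarrier M \<Longrightarrow> w \<in> mcarrier M \<Longrightarrow>
          madd M (madd M u v) w = madd M u (madd M v w)"
  using assms unfolding is_kmodule_def by auto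

lemma kmD_5: assumes "is_kmodule M" shows "\<And>u v. u \<in> mcarrier M \<Longrightarrow> v \<in> mcarrier M \<Longrightarrow> madd M u v = madd M v u"
  using assms unfolding is_kmodule_def by auto

lemma kmD_6: assumes "is_kmodule M" shows "\<And>v. v \<in> mcarrier M \<Longrightarrow> madd M (mzero M) v = v"
  using assms unfolding is_kmodule_def by auto

lemma kmD_7: assumes "is_kmodule M" shows "\<And>v. v \<in> mcarrier M \<Longrightarrow> \<exists>w\<in>mcarrier M. madd M v w = mzero M"
  using assms unfolding is_kmodule_def by auto

lemma kmD_8: assumes "is_kmodule M" shows "\<And>a u v. u \<in> mcarrier M \<Longrightarrow> v \<in> mcarrier M \<Longrightarrow>
          msmult M a (madd M u v) = madd M (msmult M a u) (msmult M a v)"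
  using assms unfolding is_kmodule_def by auto

lemma kmD_9: assumes "is_kmodule M" shows "\<And>a b v. v \<in> mcarrier M \<Longrightarrow> msmult M (a + b) v = madd M (msmult M a v) (msmult M b v)"
  using assms unfolding is_kmodule_def by auto

lemma kmD_10: assumes "is_kmodule M" shows "\<And>a b v. v \<in> mcarrier M \<Longrightarrow> msmult M (a * b) v = msmult M a (msmult M b v)"
  using assms unfolding is_kmodule_def by auto

lemma kmD_11: assumes "is_kmodule M" shows "\<And>v. v \<in> mcarrier M \<Longrightarrow> msmult M 1 v = v"
  using assms unfolding is_kmodule_def by auto

lemmas kmD = kmD_1 kmD_2 kmD_3 kmD_4 kmD_5 kmD_6 kmD_7 kmD_8 kmD_9 kmD_10 kmD_11

lemma km_zero_r: "is_kmodule M \<Longrightarrow> v \<in> mcarrier M \<Longrightarrow> madd M v (mzero M) = v"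
  using kmD(1,5,6) by metis

lemma km_cancel:
  assumes M: "is_kmodule M" and x: "x \<in> mcarrier M" and y: "y \<in> mcarrier M"
    and e: "madd M x y = x"
  shows "y = mzero M"
proof -
  obtain w where w: "w \<in> mcarrier M" "madd M x w = mzero M" using kmD(7)[OF M x] by blast
  have "madd M w (madd M x y) = madd M w x" using e by simp
  hence "madd M (madd M w x) y = madd M w x" using kmD(4)[OF M w(1) x y] by simp
  moreover have "madd M w x = mzero M" using w kmD(5)[OF M w(1) x] by simp
  ultimately show ?thesis using kmD(6)[OF M y] by simp
qed

lemma km_smult_zero: "is_kmodule M \<Longrightarrow> msmult M c (mzero M) = mzero M"
  by (metis kmD(1,3,6,8) km_cancel)

lemma km_zero_smult: "is_kmodule M \<Longrightarrow> v \<in> mcarrier M \<Longrightarrow> msmult M 0 v = mzero M"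
  by (metis add_0 kmD(3,9) km_cancel)

lemma msum_Nil[simp]: "msum M [] = mzero M" by (simp add: msum_def)
lemma msum_Cons[simp]: "msum M (v # vs) = madd M v (msum M vs)" by (simp add: msum_def)

lemma msum_in: "is_kmodule M \<Longrightarrow> set vs \<subseteq> mcarrier M \<Longrightarrow> msum M vs \<in> mcarrier M"
  by (induction vs) (auto intro: kmD)

lemma msum_append:
  assumes M: "is_kmodule M" and "set xs \<subseteq> mcarrier M" "set ys \<subseteq> mcarrier M"
  shows "msum M (xs @ ys) = madd M (msum M xs) (msum M ys)"
  using assms(2)
proof (induction xs)
  case Nil then show ?case using kmD(6)[OF M] msum_in[OF M assms(3)] by simp
next
  case (Cons a xs)
  then show ?case using kmD(4)[OF M] msum_in[OF M] assms(3) by simp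
qed

lemma msum_concat:
  assumes M: "is_kmodule M" and "\<forall>xs\<in>set xss. set xs \<subseteq> mcarrier M"
  shows "msum M (concat xss) = msum M (map (msum M) xss)"
  using assms(2)
proof (induction xss)
  case (Cons a xss)
  have "set (concat xss) \<subseteq> mcarrier M" using Cons.prems by auto
  then show ?case using Cons msum_append[OF M] by simp
qed simp

lemma msum_map_add:
  assumes M: "is_kmodule M" and "\<forall>x\<in>set xs. f x \<in> mcarrier M \<and> g x \<in> mcarrier M"
  shows "msum M (map (\<lambda>x. madd M (f x) (g x)) xs) = madd M (msum M (map f xs)) (msum M (map g xs))"
  using assms(2)
proof (induction xs)
  case Nil then show ?case using kmD(1,6)[OF M] by simp
next
  case (Cons a xs)
  let ?F = "msum M (map f xs)" and ?G = "msum M (map g xs)"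
  have F: "?F \<in> mcarrier M" and G: "?G \<in> mcarrier M" using Cons.prems by (auto intro!: msum_in[OF M])
  have fa: "f a \<in> mcarrier M" and ga: "g a \<in> mcarrier M" using Cons.prems by auto
  have "madd M (madd M (f a) (g a)) (madd M ?F ?G) = madd M (f a) (madd M (g a) (madd M ?F ?G))"
    using kmD(2,4)[OF M] fa ga F G by simp
  also have "madd M (g a) (madd M ?F ?G) = madd M ?F (madd M (g a) ?G)"
    using kmD(2,4,5)[OF M] ga F G by metis
  also have "madd M (f a) (madd M ?F (madd M (g a) ?G)) = madd M (madd M (f a) ?F) (madd M (g a) ?G)"
    using kmD(2,4)[OF M] fa ga F G by simp
  finally show ?case using Cons by simp
qed

lemma msum_smult:
  assumes M: "is_kmodule M" and "\<forall>x\<in>set xs. f x \<in> mcarrier M"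
  shows "msum M (map (\<lambda>x. msmult M c (f x)) xs) = msmult M c (msum M (map f xs))"
  using assms(2)
proof (induction xs)
  case (Cons a xs)
  have "msum M (map f xs) \<in> mcarrier M" using Cons.prems by (auto intro!: msum_in[OF M])
  then show ?case using Cons kmD(8)[OF M, of "f a" "msum M (map f xs)" c] by simp
qed (simp add: km_smult_zero[OF M])

lemma msum_zeros:
  assumes M: "is_kmodule M" and "\<forall>x\<in>set xs. f x = mzero M"
  shows "msum M (map f xs) = mzero M"
  using assms(2) by (induction xs) (auto simp: kmD(1,6)[OF M])

lemma msum_single:
  assumes M: "is_kmodule M" and "distinct xs" "p \<in> set xs" "f p \<in> mcarrier M"
  shows "msum M (map (\<lambda>i. if i = p then f i else mzero M) xs) = f p"
  using assms(2,3)
proof (induction xs)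
  case (Cons a xs)
  show ?case
  proof (cases "a = p")
    case True
    with Cons.prems have "msum M (map (\<lambda>i. if i = p then f i else mzero M) xs) = mzero M"
      by (intro msum_zeros[OF M]) auto
    then show ?thesis using True km_zero_r[OF M assms(4)] by simp
  next
    case False
    then show ?thesis using Cons kmD(6)[OF M] assms(4) by simp
  qed
qed simp

lemma klinear_zero:
  assumes M: "is_kmodule M" and N: "is_kmodule N" and f: "klinear M N f"
  shows "f (mzero M) = mzero N"
proof -
  have z: "mzero M \<in> mcarrier M" using kmD(1)[OF M] .
  have "f (madd M (mzero M) (mzero M)) = madd N (f (mzero M)) (f (mzero M))"
    using f z unfolding klinear_def by blast
  hence "madd N (f (mzero M)) (f (mzero M)) = f (mzero M)" using kmD(6)[OF M z] by simp
  thus ?thesis using km_cancel[OF N] f z unfolding klinear_def by blast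
qed

lemma klinear_msum:
  assumes M: "is_kmodule M" and N: "is_kmodule N" and f: "klinear M N f"
    and "set vs \<subseteq> mcarrier M"
  shows "f (msum M vs) = msum N (map f vs)"
  using assms(4)
proof (induction vs)
  case Nil then show ?case using klinear_zero[OF M N f] by simp
next
  case (Cons a vs)
  then show ?case using f msum_in[OF M] unfolding klinear_def by simp
qed

definition kfun :: "('k::comm_ring_1, 'a) kmod \<Rightarrow> ('a \<Rightarrow> 'k) \<Rightarrow> bool" where
  "kfun M \<phi> \<longleftrightarrow> (\<forall>u\<in>mcarrier M. \<forall>v\<in>mcarrier M. \<phi> (madd M u v) = \<phi> u + \<phi> v)
     \<and> (\<forall>c. \<forall>v\<in>mcarrier M. \<phi> (msmult M c v) = c * \<phi> v)"

lemma kfun_zero: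
  assumes M: "is_kmodule M" and f: "kfun M \<phi>" shows "\<phi> (mzero M) = 0"
proof -
  have z: "mzero M \<in> mcarrier M" using kmD(1)[OF M] .
  have "\<phi> (madd M (mzero M) (mzero M)) = \<phi> (mzero M) + \<phi> (mzero M)"
    using f z unfolding kfun_def by blast
  thus ?thesis using kmD(6)[OF M z] by simp
qed

lemma kfun_msum:
  assumes M: "is_kmodule M" and f: "kfun M \<phi>" and "set vs \<subseteq> mcarrier M"
  shows "\<phi> (msum M vs) = sum_list (map \<phi> vs)"
  using assms(3)
proof (induction vs)
  case Nil then show ?case using kfun_zero[OF M f] by simp
next
  case (Cons a vs)
  then show ?case using f msum_in[OF M] unfolding kfun_def by simp
qed

lemma kfun_comp: "klinear M N f \<Longrightarrow> kfun N \<phi> \<Longrightarrow> kfun M (\<lambda>v. \<phi> (f v))"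
  unfolding klinear_def kfun_def by simp

section \<open>Coordinates\<close>

definition expn :: "('k::comm_ring_1, 'a) kmod \<Rightarrow> (nat \<Rightarrow> 'a) \<Rightarrow> nat \<Rightarrow> (nat \<Rightarrow> 'k) \<Rightarrow> 'a" where
  "expn M b n c = msum M (map (\<lambda>i. msmult M (c i) (b i)) [0..<n])"

definition coord :: "('k::comm_ring_1, 'a) kmod \<Rightarrow> (nat \<Rightarrow> 'a) \<Rightarrow> nat \<Rightarrow> 'a \<Rightarrow> nat \<Rightarrow> 'k" where
  "coord M b n v = (THE c. (\<forall>i\<ge>n. c i = 0) \<and> v = expn M b n c)"

lemma basis_in: "is_basis M b n \<Longrightarrow> i < n \<Longrightarrow> b i \<in> mcarrier M"
  unfolding is_basis_def by (drule conjunct1) blast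

lemma expn_in: assumes M: "is_kmodule M" and B: "is_basis M b n" shows "expn M b n c \<in> mcarrier M"
  unfolding expn_def by (rule msum_in[OF M]) (auto intro!: kmD_3[OF M] basis_in[OF B])

lemma coord_spec:
  assumes "is_basis M b n" "v \<in> mcarrier M"
  shows "(\<forall>i\<ge>n. coord M b n v i = 0) \<and> v = expn M b n (coord M b n v)"
proof -
  have "\<exists>!c. (\<forall>i\<ge>n. c i = 0) \<and> v = expn M b n c" using assms unfolding is_basis_def expn_def by blast
  thus ?thesis unfolding coord_def by (rule theI')
qed

lemma coord_expn_self:
  assumes "is_basis M b n" "v \<in> mcarrier M"
  shows "expn M b n (coord M b n v) = v"
proof -
  from coord_spec[OF assms] have "v = expn M b n (coord M b n v)" by (rule conjunct2)
  thus ?thesis by (rule sym)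
qed

lemma coord_trunc: assumes "is_basis M b n" "v \<in> mcarrier M" "i \<ge> n" shows "coord M b n v i = 0"
  using coord_spec[OF assms(1,2)] assms(3) by blast

lemma coord_unique:
  assumes M: "is_kmodule M" and B: "is_basis M b n" and c: "\<forall>i\<ge>n. c i = 0"
  shows "coord M b n (expn M b n c) = c"
proof -
  have v: "expn M b n c \<in> mcarrier M" using expn_in[OF M B] .
  have u: "\<exists>!c'. (\<forall>i\<ge>n. c' i = 0) \<and> expn M b n c = expn M b n c'" using B v unfolding is_basis_def expn_def by blast
  show ?thesis unfolding coord_def by (rule the1_equality[OF u]) (simp add: c)
qed

lemma expn_cong: "(\<And>i. i < n \<Longrightarrow> c i = d i) \<Longrightarrow> expn M b n c = expn M b n d"
  unfolding expn_def by (intro arg_cong[where f="msum M"]) auto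

lemma coord_expn:
  assumes M: "is_kmodule M" and B: "is_basis M b n" and i: "i < n"
  shows "coord M b n (expn M b n c) i = c i"
proof -
  let ?c = "\<lambda>i. if i < n then c i else 0"
  have "expn M b n c = expn M b n ?c" by (rule expn_cong) simp
  thus ?thesis using coord_unique[OF M B, of ?c] i by simp
qed

lemma basis_ext:
  assumes B: "is_basis M b n" and v: "v \<in> mcarrier M" and w: "w \<in> mcarrier M"
    and e: "\<And>i. i < n \<Longrightarrow> coord M b n v i = coord M b n w i"
  shows "v = w"
proof -
  have "coord M b n v = coord M b n w"
  proof
    fix i show "coord M b n v i = coord M b n w i"
      using e coord_spec[OF B v] coord_spec[OF B w] by (cases "i < n") auto
  qed
  have "v = expn M b n (coord M b n v)" using coord_spec[OF B v] by blast
  also have "\<dots> = expn M b n (coord M b n w)" using \<open>coord M b n v = coord M b n w\<close> by simp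
  also have "\<dots> = w" using coord_spec[OF B w] by simp
  finally show ?thesis .
qed

lemma coord_add:
  assumes M: "is_kmodule M" and B: "is_basis M b n" and u: "u \<in> mcarrier M" and v: "v \<in> mcarrier M"
  shows "coord M b n (madd M u v) i = coord M b n u i + coord M b n v i"
proof -
  let ?cu = "coord M b n u" and ?cv = "coord M b n v"
  have "expn M b n (\<lambda>i. ?cu i + ?cv i)
      = msum M (map (\<lambda>i. madd M (msmult M (?cu i) (b i)) (msmult M (?cv i) (b i))) [0..<n])"
    unfolding expn_def
    by (rule arg_cong[where f="msum M"], rule map_cong[OF refl]) (simp add: kmD_9[OF M] basis_in[OF B])
  also have "\<dots> = madd M (expn M b n ?cu) (expn M b n ?cv)"
    unfolding expn_def by (rule msum_map_add[OF M]) (auto intro!: kmD_3[OF M] basis_in[OF B])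
  also have "\<dots> = madd M u v" by (simp only: coord_expn_self[OF B u] coord_expn_self[OF B v])
  finally have e: "expn M b n (\<lambda>i. ?cu i + ?cv i) = madd M u v" .
  have "coord M b n (expn M b n (\<lambda>i. ?cu i + ?cv i)) = (\<lambda>i. ?cu i + ?cv i)"
    by (rule coord_unique[OF M B]) (simp add: coord_trunc[OF B u] coord_trunc[OF B v])
  hence "coord M b n (madd M u v) = (\<lambda>i. ?cu i + ?cv i)" using e by simp
  thus ?thesis by simp
qed

lemma coord_smult:
  assumes M: "is_kmodule M" and B: "is_basis M b n" and v: "v \<in> mcarrier M"
  shows "coord M b n (msmult M c v) i = c * coord M b n v i"
proof -
  let ?cv = "coord M b n v"
  have "expn M b n (\<lambda>i. c * ?cv i)
      = msum M (map (\<lambda>i. msmult M c (msmult M (?cv i) (b i))) [0..<n])"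
    unfolding expn_def
    by (rule arg_cong[where f="msum M"], rule map_cong[OF refl]) (simp add: kmD_10[OF M] basis_in[OF B])
  also have "\<dots> = msmult M c (expn M b n ?cv)"
    unfolding expn_def by (rule msum_smult[OF M]) (auto intro!: kmD_3[OF M] basis_in[OF B])
  also have "\<dots> = msmult M c v" by (simp only: coord_expn_self[OF B v])
  finally have e: "expn M b n (\<lambda>i. c * ?cv i) = msmult M c v" .
  have "coord M b n (expn M b n (\<lambda>i. c * ?cv i)) = (\<lambda>i. c * ?cv i)"
    by (rule coord_unique[OF M B]) (simp add: coord_trunc[OF B v])
  hence "coord M b n (msmult M c v) = (\<lambda>i. c * ?cv i)" using e by simp
  thus ?thesis by simp
qed

lemma kfun_coord: "is_kmodule M \<Longrightarrow> is_basis M b n \<Longrightarrow> kfun M (\<lambda>v. coord M b n v i)"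
  unfolding kfun_def by (simp add: coord_add coord_smult)

lemma coord_basis:
  assumes M: "is_kmodule M" and B: "is_basis M b n" and p: "p < n" and i: "i < n"
  shows "coord M b n (b p) i = (if i = p then 1 else 0)"
proof -
  have "expn M b n (\<lambda>i. if i = p then 1 else 0)
     = msum M (map (\<lambda>i. if i = p then b i else mzero M) [0..<n])"
    unfolding expn_def using basis_in[OF B] kmD(11)[OF M] km_zero_smult[OF M]
    by (intro arg_cong[where f="msum M"]) auto
  also have "\<dots> = b p" using msum_single[OF M, of "[0..<n]" p b] p basis_in[OF B p] by simp
  finally show ?thesis using coord_expn[OF M B i, of "\<lambda>i. if i = p then 1 else 0"] by simp
qed

lemma kfun_expand:
  assumes M: "is_kmodule M" and B: "is_basis M b n" and f: "kfun M \<phi>" and v: "v \<in> mcarrier M"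
  shows "\<phi> v = (\<Sum>i<n. coord M b n v i * \<phi> (b i))"
proof -
  have "\<phi> v = \<phi> (expn M b n (coord M b n v))" by (simp only: coord_expn_self[OF B v])
  also have "\<dots> = sum_list (map (\<lambda>i. \<phi> (msmult M (coord M b n v i) (b i))) [0..<n])"
    unfolding expn_def by (subst kfun_msum[OF M f]) (auto intro!: kmD(3)[OF M] basis_in[OF B] simp: comp_def)
  also have "\<dots> = sum_list (map (\<lambda>i. coord M b n v i * \<phi> (b i)) [0..<n])"
    using f basis_in[OF B] unfolding kfun_def by (intro arg_cong[where f=sum_list]) auto
  also have "\<dots> = (\<Sum>i<n. coord M b n v i * \<phi> (b i))"
    by (simp add: sum_list_sum_nth atLeast0LessThan)
  finally show ?thesis .
qed



definition mlin :: "('k::comm_ring_1, 'a) kmod \<Rightarrow> nat \<Rightarrow> ('a list \<Rightarrow> 'k) \<Rightarrow> bool" where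
  "mlin M d \<phi> \<longleftrightarrow>
    (\<forall>u w a b. set u \<subseteq> mcarrier M \<and> set w \<subseteq> mcarrier M \<and> a \<in> mcarrier M \<and> b \<in> mcarrier M
       \<and> length u + length w + 1 = d \<longrightarrow> \<phi> (u @ madd M a b # w) = \<phi> (u @ a # w) + \<phi> (u @ b # w))
  \<and> (\<forall>u w a c. set u \<subseteq> mcarrier M \<and> set w \<subseteq> mcarrier M \<and> a \<in> mcarrier M
       \<and> length u + length w + 1 = d \<longrightarrow> \<phi> (u @ msmult M c a # w) = c * \<phi> (u @ a # w))"

lemma sum_ind:
  assumes "finite S" "w \<in> S"
  shows "(\<Sum>z\<in>S. ind w z * f z) = (f w :: 'k::comm_ring_1)"
proof -
  have "(\<Sum>z\<in>S. ind w z * f z) = (\<Sum>z\<in>S. if z = w then f z else 0)"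
    by (rule sum.cong) (auto simp: ind_def)
  also have "\<dots> = f w" using assms by simp
  finally show ?thesis .
qed

lemma rel_zero:
  assumes ml: "mlin M d \<phi>" and r: "r \<in> tensor_rel M d"
  shows "\<exists>W. finite W \<and> (\<forall>S. finite S \<longrightarrow> W \<subseteq> S \<longrightarrow> (\<Sum>z\<in>S. r z * \<phi> z) = 0)"
  using r unfolding tensor_rel_def
proof (elim UnE CollectE exE conjE)
  fix u w a b
  assume r: "r = (\<lambda>z. ind (u @ madd M a b # w) z - ind (u @ a # w) z - ind (u @ b # w) z)"
    and h: "set u \<subseteq> mcarrier M" "set w \<subseteq> mcarrier M" "a \<in> mcarrier M" "b \<in> mcarrier M"
      "length u + length w + 1 = d"
  let ?W = "{u @ madd M a b # w, u @ a # w, u @ b # w}"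
  have e: "\<phi> (u @ madd M a b # w) = \<phi> (u @ a # w) + \<phi> (u @ b # w)" using ml h unfolding mlin_def by blast
  show ?thesis
  proof (intro exI[of _ ?W] conjI allI impI)
    fix S assume S: "finite S" "?W \<subseteq> S"
    have "(\<Sum>z\<in>S. r z * \<phi> z) = (\<Sum>z\<in>S. ind (u @ madd M a b # w) z * \<phi> z)
        - (\<Sum>z\<in>S. ind (u @ a # w) z * \<phi> z) - (\<Sum>z\<in>S. ind (u @ b # w) z * \<phi> z)"
      unfolding r by (simp add: sum_subtractf left_diff_distrib)
    also have "\<dots> = 0" using S e by (simp add: sum_ind)
    finally show "(\<Sum>z\<in>S. r z * \<phi> z) = 0" .
  qed simp
next
  fix u w a c
  assume r: "r = (\<lambda>z. ind (u @ msmult M c a # w) z - c * ind (u @ a # w) z)"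
    and h: "set u \<subseteq> mcarrier M" "set w \<subseteq> mcarrier M" "a \<in> mcarrier M"
      "length u + length w + 1 = d"
  let ?W = "{u @ msmult M c a # w, u @ a # w}"
  have e: "\<phi> (u @ msmult M c a # w) = c * \<phi> (u @ a # w)" using ml h unfolding mlin_def by blast
  show ?thesis
  proof (intro exI[of _ ?W] conjI allI impI)
    fix S assume S: "finite S" "?W \<subseteq> S"
    have "(\<Sum>z\<in>S. r z * \<phi> z) = (\<Sum>z\<in>S. ind (u @ msmult M c a # w) z * \<phi> z)
        - c * (\<Sum>z\<in>S. ind (u @ a # w) z * \<phi> z)"
      unfolding r by (simp add: sum_subtractf left_diff_distrib sum_distrib_left mult.assoc)
    also have "\<dots> = 0" using S e by (simp add: sum_ind)
    finally show "(\<Sum>z\<in>S. r z * \<phi> z) = 0" .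
  qed simp
qed

lemma sum_list_fsum:
  assumes "finite S" "set L \<subseteq> S"
  shows "sum_list (map \<phi> L) = (\<Sum>z\<in>S. fsum L z * (\<phi> z :: 'k::comm_ring_1))"
  using assms(2)
proof (induction L)
  case Nil then show ?case by (simp add: fsum_def)
next
  case (Cons x L)
  have "(\<Sum>z\<in>S. fsum (x # L) z * \<phi> z) = (\<Sum>z\<in>S. ind x z * \<phi> z + fsum L z * \<phi> z)"
    by (rule sum.cong) (auto simp: fsum_def ind_def algebra_simps)
  also have "\<dots> = \<phi> x + (\<Sum>z\<in>S. fsum L z * \<phi> z)"
    using Cons.prems assms(1) by (simp add: sum.distrib sum_ind)
  finally show ?case using Cons by simp
qed

lemma tensor_sum_eq:
  assumes ml: "mlin M d \<phi>" and te: "tensor_eq M d L1 L2"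
  shows "sum_list (map \<phi> L1) = sum_list (map \<phi> L2)"
proof -
  have "\<exists>(N::nat) c r. (\<forall>i<N. r i \<in> tensor_rel M d) \<and> (\<lambda>z. fsum L1 z - fsum L2 z) = (\<lambda>z. \<Sum>i<N. c i * r i z)"
    using te unfolding tensor_eq_def tensor_span_def mem_Collect_eq by (elim conjE) assumption
  then obtain N :: nat and c r where rN: "\<forall>i<N. r i \<in> tensor_rel M d"
    and f: "(\<lambda>z. fsum L1 z - fsum L2 z) = (\<lambda>z. \<Sum>i<N. c i * r i z)"
    by blast
  have "\<forall>i\<in>{..<N}. \<exists>W. finite W \<and> (\<forall>S. finite S \<longrightarrow> W \<subseteq> S \<longrightarrow> (\<Sum>z\<in>S. r i z * \<phi> z) = 0)"
    using rN rel_zero[OF ml] by blast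
  then obtain W where W: "\<forall>i\<in>{..<N}. finite (W i) \<and> (\<forall>S. finite S \<longrightarrow> W i \<subseteq> S \<longrightarrow> (\<Sum>z\<in>S. r i z * \<phi> z) = 0)"
    by (rule bchoice[elim_format]) blast
  define S where "S = set L1 \<union> set L2 \<union> (\<Union>i<N. W i)"
  have fS: "finite S" using W by (simp add: S_def)
  have "sum_list (map \<phi> L1) - sum_list (map \<phi> L2) = (\<Sum>z\<in>S. (fsum L1 z - fsum L2 z) * \<phi> z)"
  proof -
    have "set L1 \<subseteq> S" "set L2 \<subseteq> S" by (auto simp: S_def)
    thus ?thesis using sum_list_fsum[OF fS, of L1 \<phi>] sum_list_fsum[OF fS, of L2 \<phi>]
      by (simp add: sum_subtractf left_diff_distrib)
  qed
  also have "\<dots> = (\<Sum>z\<in>S. (\<Sum>i<N. c i * r i z) * \<phi> z)"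
    using fun_cong[OF f] by simp
  also have "\<dots> = (\<Sum>i<N. c i * (\<Sum>z\<in>S. r i z * \<phi> z))"
    by (simp add: sum_distrib_right sum_distrib_left mult.assoc) (rule sum.swap)
  also have "\<dots> = 0"
  proof (intro sum.neutral ballI)
    fix i assume i: "i \<in> {..<N}"
    have "W i \<subseteq> S" using i by (auto simp: S_def)
    thus "c i * (\<Sum>z\<in>S. r i z * \<phi> z) = 0" using W i fS by simp
  qed
  finally show ?thesis by simp
qed

definition mlinN :: "('k::comm_ring_1, 'a) kmod \<Rightarrow> ('k, 'b) kmod \<Rightarrow> nat \<Rightarrow> ('a list \<Rightarrow> 'b) \<Rightarrow> bool" where
  "mlinN M N d \<psi> \<longleftrightarrow>
    (\<forall>w. length w = d \<and> set w \<subseteq> mcarrier M \<longrightarrow> \<psi> w \<in> mcarrier N)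
  \<and> (\<forall>u w a b. set u \<subseteq> mcarrier M \<and> set w \<subseteq> mcarrier M \<and> a \<in> mcarrier M \<and> b \<in> mcarrier M
       \<and> length u + length w + 1 = d \<longrightarrow> \<psi> (u @ madd M a b # w) = madd N (\<psi> (u @ a # w)) (\<psi> (u @ b # w)))
  \<and> (\<forall>u w a c. set u \<subseteq> mcarrier M \<and> set w \<subseteq> mcarrier M \<and> a \<in> mcarrier M
       \<and> length u + length w + 1 = d \<longrightarrow> \<psi> (u @ msmult M c a # w) = msmult N c (\<psi> (u @ a # w)))"

lemma tensor_msum_eq:
  assumes M: "is_kmodule M" and N: "is_kmodule N" and B: "is_basis N e n"
    and ml: "mlinN M N d \<psi>" and te: "tensor_eq M d L1 L2"
  shows "msum N (map \<psi> L1) = msum N (map \<psi> L2)"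
proof -
  have wl: "\<forall>w\<in>set L1 \<union> set L2. length w = d \<and> set w \<subseteq> mcarrier M" using te unfolding tensor_eq_def by blast
  have inN: "\<psi> w \<in> mcarrier N" if "w \<in> set L1 \<union> set L2" for w using ml wl that unfolding mlinN_def by blast
  have s1: "set (map \<psi> L1) \<subseteq> mcarrier N" and s2: "set (map \<psi> L2) \<subseteq> mcarrier N" using inN by auto
  show ?thesis
  proof (rule basis_ext[OF B msum_in[OF N s1] msum_in[OF N s2]])
    fix q assume q: "q < n"
    let ?\<phi> = "\<lambda>w. coord N e n (\<psi> w) q"
    have mlq: "mlin M d ?\<phi>"
    proof -
      have ins: "\<psi> (u @ a # w) \<in> mcarrier N" if "set u \<subseteq> mcarrier M" "set w \<subseteq> mcarrier M" "a \<in> mcarrier M"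
          "length u + length w + 1 = d" for u w a
        using ml that unfolding mlinN_def by auto
      show ?thesis unfolding mlin_def
      proof (intro conjI allI impI)
        fix u w a b assume h: "set u \<subseteq> mcarrier M \<and> set w \<subseteq> mcarrier M \<and> a \<in> mcarrier M \<and> b \<in> mcarrier M
          \<and> length u + length w + 1 = d"
        hence "\<psi> (u @ madd M a b # w) = madd N (\<psi> (u @ a # w)) (\<psi> (u @ b # w))" using ml unfolding mlinN_def by blast
        thus "?\<phi> (u @ madd M a b # w) = ?\<phi> (u @ a # w) + ?\<phi> (u @ b # w)"
          using coord_add[OF N B ins ins] h by simp
      next
        fix u w a c assume h: "set u \<subseteq> mcarrier M \<and> set w \<subseteq> mcarrier M \<and> a \<in> mcarrier M
          \<and> length u + length w + 1 = d"
        hence "\<psi> (u @ msmult M c a # w) = msmult N c (\<psi> (u @ a # w))" using ml unfolding mlinN_def by blast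
        thus "?\<phi> (u @ msmult M c a # w) = c * ?\<phi> (u @ a # w)"
          using coord_smult[OF N B ins] h by simp
      qed
    qed
    have "coord N e n (msum N (map \<psi> L1)) q = sum_list (map ?\<phi> L1)"
      using kfun_msum[OF N kfun_coord[OF N B] s1] by (simp add: comp_def)
    also have "\<dots> = sum_list (map ?\<phi> L2)" by (rule tensor_sum_eq[OF mlq te])
    also have "\<dots> = coord N e n (msum N (map \<psi> L2)) q"
      using kfun_msum[OF N kfun_coord[OF N B] s2] by (simp add: comp_def)
    finally show "coord N e n (msum N (map \<psi> L1)) q = coord N e n (msum N (map \<psi> L2)) q" .
  qed
qed



context
  fixes X A m j delta eps
  assumes SH: "semi_hopf_category X A m j delta eps"
begin

lemma sh1: "\<forall>x\<in>X. \<forall>y\<in>X. is_kmodule (A x y) \<and> coalgebra (A x y) (delta x y) (eps x y)"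
  using SH unfolding semi_hopf_category_def by (elim conjE) assumption

lemma sh2: "\<forall>x\<in>X. \<forall>y\<in>X. \<forall>z\<in>X.
        (\<forall>a\<in>mcarrier (A x y). \<forall>b\<in>mcarrier (A y z). m x y z a b \<in> mcarrier (A x z))
      \<and> (\<forall>a\<in>mcarrier (A x y). \<forall>a'\<in>mcarrier (A x y). \<forall>b\<in>mcarrier (A y z).
           m x y z (madd (A x y) a a') b = madd (A x z) (m x y z a b) (m x y z a' b))
      \<and> (\<forall>a\<in>mcarrier (A x y). \<forall>b\<in>mcarrier (A y z). \<forall>b'\<in>mcarrier (A y z).
           m x y z a (madd (A y z) b b') = madd (A x z) (m x y z a b) (m x y z a b'))
      \<and> (\<forall>c. \<forall>a\<in>mcarrier (A x y). \<forall>b\<in>mcarrier (A y z).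
           m x y z (msmult (A x y) c a) b = msmult (A x z) c (m x y z a b)
         \<and> m x y z a (msmult (A y z) c b) = msmult (A x z) c (m x y z a b))"
  using SH unfolding semi_hopf_category_def by (elim conjE) assumption

lemma sh3: "\<forall>x\<in>X. j x \<in> mcarrier (A x x)"
  using SH unfolding semi_hopf_category_def by (elim conjE) assumption

lemma sh4: "\<forall>x\<in>X. \<forall>y\<in>X. \<forall>z\<in>X. \<forall>w\<in>X.
        \<forall>a\<in>mcarrier (A x y). \<forall>b\<in>mcarrier (A y z). \<forall>c\<in>mcarrier (A z w).
          m x z w (m x y z a b) c = m x y w a (m y z w b c)"
  using SH unfolding semi_hopf_category_def by (elim conjE) assumption

lemma sh5: "\<forall>x\<in>X. \<forall>y\<in>X. \<forall>a\<in>mcarrier (A x y). m x x y (j x) a = a \<and> m x y y a (j y) = a"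
  using SH unfolding semi_hopf_category_def by (elim conjE) assumption

lemma sh_mod: "x \<in> X \<Longrightarrow> y \<in> X \<Longrightarrow> is_kmodule (A x y)"
  using sh1 by simp

lemma sh_coalg: "x \<in> X \<Longrightarrow> y \<in> X \<Longrightarrow> coalgebra (A x y) (delta x y) (eps x y)"
  using sh1 by simp

lemma sh_m_in: "x \<in> X \<Longrightarrow> y \<in> X \<Longrightarrow> z \<in> X \<Longrightarrow> a \<in> mcarrier (A x y) \<Longrightarrow> b \<in> mcarrier (A y z)
   \<Longrightarrow> m x y z a b \<in> mcarrier (A x z)"
  using sh2 by simp

lemma sh_m_lin2: "x \<in> X \<Longrightarrow> y \<in> X \<Longrightarrow> z \<in> X \<Longrightarrow> a \<in> mcarrier (A x y)
   \<Longrightarrow> klinear (A y z) (A x z) (m x y z a)"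
  using sh2 unfolding klinear_def by simp

lemma sh_m_lin1: "x \<in> X \<Longrightarrow> y \<in> X \<Longrightarrow> z \<in> X \<Longrightarrow> b \<in> mcarrier (A y z)
   \<Longrightarrow> klinear (A x y) (A x z) (\<lambda>t. m x y z t b)"
  using sh2 unfolding klinear_def by simp

lemma sh_j_in: "x \<in> X \<Longrightarrow> j x \<in> mcarrier (A x x)"
  using sh3 by simp

lemma sh_assoc: "x \<in> X \<Longrightarrow> y \<in> X \<Longrightarrow> z \<in> X \<Longrightarrow> w \<in> X \<Longrightarrow> a \<in> mcarrier (A x y)
   \<Longrightarrow> b \<in> mcarrier (A y z) \<Longrightarrow> c \<in> mcarrier (A z w)
   \<Longrightarrow> m x z w (m x y z a b) c = m x y w a (m y z w b c)"
  using sh4 by simp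

lemma sh_unit_l: "x \<in> X \<Longrightarrow> y \<in> X \<Longrightarrow> a \<in> mcarrier (A x y) \<Longrightarrow> m x x y (j x) a = a"
  using sh5 by simp

lemma sh_unit_r: "x \<in> X \<Longrightarrow> y \<in> X \<Longrightarrow> a \<in> mcarrier (A x y) \<Longrightarrow> m x y y a (j y) = a"
  using sh5 by simp

end

context
  fixes M :: "('k::comm_ring_1, 'a) kmod" and delta eps
  assumes C: "coalgebra M delta eps"
begin

lemma co1: "\<forall>a\<in>mcarrier M. set (delta a) \<subseteq> mcarrier M \<times> mcarrier M"
  using C unfolding coalgebra_def by (elim conjE) assumption
lemma co2: "\<forall>a\<in>mcarrier M. \<forall>b\<in>mcarrier M. tensor2_eq M (delta (madd M a b)) (delta a @ delta b)"
  using C unfolding coalgebra_def by (elim conjE) assumption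
lemma co3: "\<forall>c. \<forall>a\<in>mcarrier M. tensor2_eq M (delta (msmult M c a))
          (map (\<lambda>(u, v). (msmult M c u, v)) (delta a))"
  using C unfolding coalgebra_def by (elim conjE) assumption
lemma co4: "\<forall>a\<in>mcarrier M. \<forall>b\<in>mcarrier M. eps (madd M a b) = eps a + eps b"
  using C unfolding coalgebra_def by (elim conjE) assumption
lemma co5: "\<forall>c. \<forall>a\<in>mcarrier M. eps (msmult M c a) = c * eps a"
  using C unfolding coalgebra_def by (elim conjE) assumption
lemma co6: "\<forall>a\<in>mcarrier M. tensor_eq M 3
          (concat (map (\<lambda>(u, v). map (\<lambda>(p, q). [p, q, v]) (delta u)) (delta a)))
          (concat (map (\<lambda>(u, v). map (\<lambda>(p, q). [u, p, q]) (delta v)) (delta a)))"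
  using C unfolding coalgebra_def by (elim conjE) assumption
lemma co7: "\<forall>a\<in>mcarrier M. msum M (map (\<lambda>(u, v). msmult M (eps u) v) (delta a)) = a"
  using C unfolding coalgebra_def by (elim conjE) assumption
lemma co8: "\<forall>a\<in>mcarrier M. msum M (map (\<lambda>(u, v). msmult M (eps v) u) (delta a)) = a"
  using C unfolding coalgebra_def by (elim conjE) assumption

lemma co_delta_in: "a \<in> mcarrier M \<Longrightarrow> (u, v) \<in> set (delta a) \<Longrightarrow> u \<in> mcarrier M \<and> v \<in> mcarrier M"
  using co1 by blast

lemma co_eps_kfun: "kfun M eps"
  unfolding kfun_def using co4 co5 by simp

end

section \<open>Bilinear and trilinear maps respect tensor equality\<close>

definition bilin :: "('k::comm_ring_1, 'a) kmod \<Rightarrow> ('k, 'b) kmod \<Rightarrow> ('a \<Rightarrow> 'a \<Rightarrow> 'b) \<Rightarrow> bool" where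
  "bilin M N F \<longleftrightarrow> (\<forall>u\<in>mcarrier M. \<forall>v\<in>mcarrier M. F u v \<in> mcarrier N)
    \<and> (\<forall>v\<in>mcarrier M. klinear M N (\<lambda>u. F u v)) \<and> (\<forall>u\<in>mcarrier M. klinear M N (F u))"

lemma bilin_mlinN:
  assumes "bilin M N F"
  shows "mlinN M N 2 (\<lambda>w. F (w!0) (w!1))"
  unfolding mlinN_def
proof (intro conjI allI impI)
  fix w assume "length w = 2 \<and> set w \<subseteq> mcarrier M"
  then obtain a0 a1 where "w = [a0, a1]" by (auto simp: length_Suc_conv numeral_2_eq_2)
  then show "F (w!0) (w!1) \<in> mcarrier N" using assms \<open>length w = 2 \<and> set w \<subseteq> mcarrier M\<close> unfolding bilin_def by simp
next
  fix u w and a b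
  assume h: "set u \<subseteq> mcarrier M \<and> set w \<subseteq> mcarrier M \<and> a \<in> mcarrier M \<and> b \<in> mcarrier M
       \<and> length u + length w + 1 = 2"
  then have "(u = [] \<and> length w = 1) \<or> (length u = 1 \<and> w = [])" by (cases u) auto
  then show "F ((u @ madd M a b # w) ! 0) ((u @ madd M a b # w) ! 1) =
       madd N (F ((u @ a # w) ! 0) ((u @ a # w) ! 1)) (F ((u @ b # w) ! 0) ((u @ b # w) ! 1))"
  proof
    assume "u = [] \<and> length w = 1"
    then obtain w0 where "u = []" "w = [w0]" by (auto simp: length_Suc_conv)
    with h assms show ?thesis unfolding bilin_def klinear_def by simp
  next
    assume "length u = 1 \<and> w = []"
    then obtain u0 where "u = [u0]" "w = []" by (auto simp: length_Suc_conv)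
    with h assms show ?thesis unfolding bilin_def klinear_def by simp
  qed
next
  fix u w and a c
  assume h: "set u \<subseteq> mcarrier M \<and> set w \<subseteq> mcarrier M \<and> a \<in> mcarrier M
       \<and> length u + length w + 1 = 2"
  then have "(u = [] \<and> length w = 1) \<or> (length u = 1 \<and> w = [])" by (cases u) auto
  then show "F ((u @ msmult M c a # w) ! 0) ((u @ msmult M c a # w) ! 1) =
       msmult N c (F ((u @ a # w) ! 0) ((u @ a # w) ! 1))"
  proof
    assume "u = [] \<and> length w = 1"
    then obtain w0 where "u = []" "w = [w0]" by (auto simp: length_Suc_conv)
    with h assms show ?thesis unfolding bilin_def klinear_def by simp
  next
    assume "length u = 1 \<and> w = []"
    then obtain u0 where "u = [u0]" "w = []" by (auto simp: length_Suc_conv)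
    with h assms show ?thesis unfolding bilin_def klinear_def by simp
  qed
qed

lemma tensor2_msum:
  assumes M: "is_kmodule M" and N: "is_kmodule N" and B: "is_basis N e n"
    and F: "bilin M N F" and te: "tensor2_eq M L1 L2"
  shows "msum N (map (\<lambda>(u, v). F u v) L1) = msum N (map (\<lambda>(u, v). F u v) L2)"
proof -
  have e: "\<And>L. map (\<lambda>w. F (w!0) (w!1)) (map (\<lambda>(u, v). [u, v]) L) = map (\<lambda>(u, v). F u v) L"
    by (simp add: split_beta comp_def)
  have "msum N (map (\<lambda>w. F (w!0) (w!1)) (map (\<lambda>(u, v). [u, v]) L1))
      = msum N (map (\<lambda>w. F (w!0) (w!1)) (map (\<lambda>(u, v). [u, v]) L2))"
    by (rule tensor_msum_eq[OF M N B bilin_mlinN[OF F]]) (use te in \<open>simp add: tensor2_eq_def\<close>)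
  thus ?thesis by (simp only: e)
qed

definition trilin :: "('k::comm_ring_1, 'a) kmod \<Rightarrow> ('k, 'b) kmod \<Rightarrow> ('a \<Rightarrow> 'a \<Rightarrow> 'a \<Rightarrow> 'b) \<Rightarrow> bool" where
  "trilin M N F \<longleftrightarrow> (\<forall>u\<in>mcarrier M. \<forall>v\<in>mcarrier M. \<forall>w\<in>mcarrier M. F u v w \<in> mcarrier N)
    \<and> (\<forall>v\<in>mcarrier M. \<forall>w\<in>mcarrier M. klinear M N (\<lambda>u. F u v w))
    \<and> (\<forall>u\<in>mcarrier M. \<forall>w\<in>mcarrier M. klinear M N (\<lambda>v. F u v w))
    \<and> (\<forall>u\<in>mcarrier M. \<forall>v\<in>mcarrier M. klinear M N (F u v))"

lemma len3_cases:
  assumes "length u + length w + 1 = (3::nat)"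
  shows "(\<exists>w0 w1. u = [] \<and> w = [w0, w1]) \<or> (\<exists>u0 w0. u = [u0] \<and> w = [w0]) \<or> (\<exists>u0 u1. u = [u0, u1] \<and> w = [])"
proof -
  have "length u \<le> 2" using assms by simp
  then consider "length u = 0" | "length u = 1" | "length u = 2" by linarith
  then show ?thesis
  proof cases
    case 1
    hence "u = []" "length w = 2" using assms by auto
    then show ?thesis by (auto simp: length_Suc_conv numeral_2_eq_2)
  next
    case 2
    hence "length w = 1" using assms by auto
    with 2 show ?thesis by (auto simp: length_Suc_conv)
  next
    case 3
    hence "w = []" using assms by auto
    with 3 show ?thesis by (auto simp: length_Suc_conv numeral_2_eq_2)
  qed
qed

lemma trilin_mlinN:
  assumes "trilin M N F"
  shows "mlinN M N 3 (\<lambda>w. F (w!0) (w!1) (w!2))"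
  unfolding mlinN_def
proof (intro conjI allI impI)
  fix w assume h: "length w = 3 \<and> set w \<subseteq> mcarrier M"
  then obtain a0 a1 a2 where "w = [a0, a1, a2]" by (auto simp: length_Suc_conv numeral_3_eq_3)
  then show "F (w!0) (w!1) (w!2) \<in> mcarrier N" using assms h unfolding trilin_def by simp
next
  fix u w and a b
  assume h: "set u \<subseteq> mcarrier M \<and> set w \<subseteq> mcarrier M \<and> a \<in> mcarrier M \<and> b \<in> mcarrier M
       \<and> length u + length w + 1 = 3"
  then show "F ((u @ madd M a b # w) ! 0) ((u @ madd M a b # w) ! 1) ((u @ madd M a b # w) ! 2) =
       madd N (F ((u @ a # w) ! 0) ((u @ a # w) ! 1) ((u @ a # w) ! 2))
         (F ((u @ b # w) ! 0) ((u @ b # w) ! 1) ((u @ b # w) ! 2))"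
    using len3_cases[of u w] assms unfolding trilin_def klinear_def by auto
next
  fix u w and a c
  assume h: "set u \<subseteq> mcarrier M \<and> set w \<subseteq> mcarrier M \<and> a \<in> mcarrier M
       \<and> length u + length w + 1 = 3"
  then show "F ((u @ msmult M c a # w) ! 0) ((u @ msmult M c a # w) ! 1) ((u @ msmult M c a # w) ! 2) =
       msmult N c (F ((u @ a # w) ! 0) ((u @ a # w) ! 1) ((u @ a # w) ! 2))"
    using len3_cases[of u w] assms unfolding trilin_def klinear_def by auto
qed



lemma klinear_comp: "klinear M N f \<Longrightarrow> klinear N P g \<Longrightarrow> klinear M P (\<lambda>v. g (f v))"
  unfolding klinear_def by simp

lemma klinear_id: "klinear M M (\<lambda>v. v)"
  unfolding klinear_def by simp

lemma klinear_msum_map: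
  assumes M: "is_kmodule M" and N: "is_kmodule N" and f: "klinear M N f"
    and "\<forall>x\<in>set xs. g x \<in> mcarrier M"
  shows "f (msum M (map g xs)) = msum N (map (\<lambda>x. f (g x)) xs)"
  using klinear_msum[OF M N f, of "map g xs"] assms(4) by (auto simp: comp_def)

lemma msum_concat_pairs:
  assumes N: "is_kmodule N"
    and C: "\<forall>(u,v)\<in>set L. \<forall>(p,q)\<in>set (D u v). \<Phi> (W u v p q) \<in> mcarrier N"
  shows "msum N (map \<Phi> (concat (map (\<lambda>(u,v). map (\<lambda>(p,q). W u v p q) (D u v)) L)))
       = msum N (map (\<lambda>(u,v). msum N (map (\<lambda>(p,q). \<Phi> (W u v p q)) (D u v))) L)"
  using C
proof (induction L)
  case Nil then show ?case by simp
next
  case (Cons uv L)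
  obtain u v where uv: "uv = (u, v)" by (cases uv)
  have s1: "set (map \<Phi> (map (\<lambda>(p,q). W u v p q) (D u v))) \<subseteq> mcarrier N"
    using Cons.prems uv by auto
  have s2: "set (map \<Phi> (concat (map (\<lambda>(u,v). map (\<lambda>(p,q). W u v p q) (D u v)) L))) \<subseteq> mcarrier N"
    using Cons.prems by auto
  have e: "map \<Phi> (map (\<lambda>(p,q). W u v p q) (D u v)) = map (\<lambda>(p,q). \<Phi> (W u v p q)) (D u v)"
    by (simp add: comp_def case_prod_unfold)
  have IH: "msum N (map \<Phi> (concat (map (\<lambda>(u,v). map (\<lambda>(p,q). W u v p q) (D u v)) L)))
       = msum N (map (\<lambda>(u,v). msum N (map (\<lambda>(p,q). \<Phi> (W u v p q)) (D u v))) L)"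
    using Cons by simp
  have "msum N (map \<Phi> (concat (map (\<lambda>(u,v). map (\<lambda>(p,q). W u v p q) (D u v)) (uv # L))))
      = msum N (map \<Phi> (map (\<lambda>(p,q). W u v p q) (D u v)) @
                 map \<Phi> (concat (map (\<lambda>(u,v). map (\<lambda>(p,q). W u v p q) (D u v)) L)))"
    by (simp add: uv)
  also have "\<dots> = madd N (msum N (map \<Phi> (map (\<lambda>(p,q). W u v p q) (D u v))))
                 (msum N (map \<Phi> (concat (map (\<lambda>(u,v). map (\<lambda>(p,q). W u v p q) (D u v)) L))))"
    by (rule msum_append[OF N s1 s2])
  also have "\<dots> = madd N (msum N (map (\<lambda>(p,q). \<Phi> (W u v p q)) (D u v)))
                 (msum N (map (\<lambda>(u,v). msum N (map (\<lambda>(p,q). \<Phi> (W u v p q)) (D u v))) L))"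
    by (simp only: e IH)
  also have "\<dots> = msum N (map (\<lambda>(u,v). msum N (map (\<lambda>(p,q). \<Phi> (W u v p q)) (D u v))) (uv # L))"
    by (simp add: uv)
  finally show ?case .
qed

lemma map_pair_cong:
  "(\<And>u v. (u, v) \<in> set L \<Longrightarrow> f u v = g u v) \<Longrightarrow> map (\<lambda>(u, v). f u v) L = map (\<lambda>(u, v). g u v) L"
  by (induction L) auto

definition Lop :: "('x \<Rightarrow> 'x \<Rightarrow> ('k::comm_ring_1, 'a) kmod) \<Rightarrow> ('x \<Rightarrow> 'x \<Rightarrow> 'x \<Rightarrow> 'a \<Rightarrow> 'a \<Rightarrow> 'a)
   \<Rightarrow> ('x \<Rightarrow> 'x \<Rightarrow> 'a \<Rightarrow> ('a \<times> 'a) list) \<Rightarrow> 'x \<Rightarrow> 'x \<Rightarrow> ('a \<Rightarrow> 'a) \<Rightarrow> 'a \<Rightarrow> 'a" where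
  "Lop A m delta x y g a = msum (A x y) (map (\<lambda>(u, v). m x y y u (g v)) (delta x y a))"

definition Rop :: "('x \<Rightarrow> 'x \<Rightarrow> ('k::comm_ring_1, 'a) kmod) \<Rightarrow> ('x \<Rightarrow> 'x \<Rightarrow> 'x \<Rightarrow> 'a \<Rightarrow> 'a \<Rightarrow> 'a)
   \<Rightarrow> ('x \<Rightarrow> 'x \<Rightarrow> 'a \<Rightarrow> ('a \<times> 'a) list) \<Rightarrow> ('x \<Rightarrow> 'x \<Rightarrow> 'a \<Rightarrow> 'a) \<Rightarrow> 'x \<Rightarrow> 'x \<Rightarrow> ('a \<Rightarrow> 'a) \<Rightarrow> 'a \<Rightarrow> 'a" where
  "Rop A m delta s x y h a = msum (A y y) (map (\<lambda>(u, v). m y x y (s x y u) (h v)) (delta x y a))"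

locale LA =
  fixes X :: "'x set" and A :: "'x \<Rightarrow> 'x \<Rightarrow> ('k::comm_ring_1, 'a) kmod"
    and m :: "'x \<Rightarrow> 'x \<Rightarrow> 'x \<Rightarrow> 'a \<Rightarrow> 'a \<Rightarrow> 'a" and j :: "'x \<Rightarrow> 'a"
    and delta :: "'x \<Rightarrow> 'x \<Rightarrow> 'a \<Rightarrow> ('a \<times> 'a) list" and eps :: "'x \<Rightarrow> 'x \<Rightarrow> 'a \<Rightarrow> 'k"
    and s :: "'x \<Rightarrow> 'x \<Rightarrow> 'a \<Rightarrow> 'a" and x y :: 'x and b e :: "nat \<Rightarrow> 'a" and n :: nat
  assumes SH: "semi_hopf_category X A m j delta eps"
    and RA: "right_antipode X A m j delta eps s"
    and xX: "x \<in> X" and yX: "y \<in> X"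
    and Bb: "is_basis (A x y) b n" and Be: "is_basis (A y y) e n"
begin

abbreviation "Lo \<equiv> Lop A m delta x y"
abbreviation "Ro \<equiv> Rop A m delta s x y"

lemma Mxy: "is_kmodule (A x y)" using sh_mod[OF SH xX yX] .
lemma Myy: "is_kmodule (A y y)" using sh_mod[OF SH yX yX] .
lemma Myx: "is_kmodule (A y x)" using sh_mod[OF SH yX xX] .
lemma Mxx: "is_kmodule (A x x)" using sh_mod[OF SH xX xX] .
lemma Cxy: "coalgebra (A x y) (delta x y) (eps x y)" using sh_coalg[OF SH xX yX] .

lemma RA_xy: "klinear (A x y) (A y x) (s x y)
        \<and> (\<forall>a\<in>mcarrier (A x y).
             msum (A x x) (map (\<lambda>(u, v). m x y x u (s x y v)) (delta x y a))
               = msmult (A x x) (eps x y a) (j x))"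
  by (rule bspec[OF bspec[OF RA[unfolded right_antipode_def] xX] yX])

lemma s_lin: "klinear (A x y) (A y x) (s x y)"
  using RA_xy by (rule conjunct1)

lemma RA_eq: "a \<in> mcarrier (A x y) \<Longrightarrow>
   msum (A x x) (map (\<lambda>(u, v). m x y x u (s x y v)) (delta x y a)) = msmult (A x x) (eps x y a) (j x)"
  using RA_xy by simp

lemma s_in: "u \<in> mcarrier (A x y) \<Longrightarrow> s x y u \<in> mcarrier (A y x)"
  using s_lin unfolding klinear_def by blast

lemma din: "a \<in> mcarrier (A x y) \<Longrightarrow> (u, v) \<in> set (delta x y a) \<Longrightarrow> u \<in> mcarrier (A x y) \<and> v \<in> mcarrier (A x y)"
  using co_delta_in[OF Cxy] by blast

lemma pairs_in:
  assumes a: "a \<in> mcarrier (A x y)" and F: "\<And>u v. u \<in> mcarrier (A x y) \<Longrightarrow> v \<in> mcarrier (A x y) \<Longrightarrow> F u v \<in> N"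
  shows "\<forall>z\<in>set (delta x y a). (\<lambda>(u, v). F u v) z \<in> N"
proof
  fix z assume z: "z \<in> set (delta x y a)"
  obtain u v where zz: "z = (u, v)" by (cases z)
  show "(\<lambda>(u, v). F u v) z \<in> N" using din[OF a z[unfolded zz]] F zz by simp
qed

lemma pairs_in':
  assumes a: "a \<in> mcarrier (A x y)" and F: "\<And>u v. u \<in> mcarrier (A x y) \<Longrightarrow> v \<in> mcarrier (A x y) \<Longrightarrow> F u v \<in> N"
  shows "set (map (\<lambda>(u, v). F u v) (delta x y a)) \<subseteq> N"
proof -
  have "\<forall>z\<in>set (delta x y a). (\<lambda>(u, v). F u v) z \<in> N" by (rule pairs_in[OF a]) (rule F)
  thus ?thesis by auto
qed

lemma pairs2_in:
  assumes a: "a \<in> mcarrier (A x y)"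
    and G: "\<And>u v p q. u \<in> mcarrier (A x y) \<Longrightarrow> v \<in> mcarrier (A x y) \<Longrightarrow> p \<in> mcarrier (A x y) \<Longrightarrow> q \<in> mcarrier (A x y) \<Longrightarrow> G u v p q \<in> N"
  shows "\<forall>(u, v)\<in>set (delta x y a). \<forall>(p, q)\<in>set (delta x y v). G u v p q \<in> N"
    and "\<forall>(u, v)\<in>set (delta x y a). \<forall>(p, q)\<in>set (delta x y u). G u v p q \<in> N"
proof -
  show "\<forall>(u, v)\<in>set (delta x y a). \<forall>(p, q)\<in>set (delta x y v). G u v p q \<in> N"
  proof (intro ballI, clarify)
    fix u v p q assume uv: "(u, v) \<in> set (delta x y a)" and pq: "(p, q) \<in> set (delta x y v)"
    have "u \<in> mcarrier (A x y)" "v \<in> mcarrier (A x y)" using din[OF a uv] by auto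
    moreover have "p \<in> mcarrier (A x y)" "q \<in> mcarrier (A x y)" using din[OF calculation(2) pq] by auto
    ultimately show "G u v p q \<in> N" using G by blast
  qed
  show "\<forall>(u, v)\<in>set (delta x y a). \<forall>(p, q)\<in>set (delta x y u). G u v p q \<in> N"
  proof (intro ballI, clarify)
    fix u v p q assume uv: "(u, v) \<in> set (delta x y a)" and pq: "(p, q) \<in> set (delta x y u)"
    have "u \<in> mcarrier (A x y)" "v \<in> mcarrier (A x y)" using din[OF a uv] by auto
    moreover have "p \<in> mcarrier (A x y)" "q \<in> mcarrier (A x y)" using din[OF calculation(1) pq] by auto
    ultimately show "G u v p q \<in> N" using G by blast
  qed
qed

lemma klin_in: "klinear M N f \<Longrightarrow> v \<in> mcarrier M \<Longrightarrow> f v \<in> mcarrier N"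
  unfolding klinear_def by blast

lemma Rop_in:
  assumes h: "klinear (A x y) (A x y) h" and a: "a \<in> mcarrier (A x y)"
  shows "Ro h a \<in> mcarrier (A y y)"
  unfolding Rop_def
  by (rule msum_in[OF Myy]) (auto dest!: din[OF a] intro!: sh_m_in[OF SH yX xX yX] s_in klin_in[OF h])

lemma Rop_lin:
  assumes h: "klinear (A x y) (A x y) h"
  shows "klinear (A x y) (A y y) (Ro h)"
proof -
  let ?F = "\<lambda>u v. m y x y (s x y u) (h v)"
  have F: "bilin (A x y) (A y y) ?F"
    unfolding bilin_def
  proof (intro conjI ballI)
    fix u v assume "u \<in> mcarrier (A x y)" "v \<in> mcarrier (A x y)"
    then show "?F u v \<in> mcarrier (A y y)" by (intro sh_m_in[OF SH yX xX yX] s_in klin_in[OF h])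
  next
    fix v assume v: "v \<in> mcarrier (A x y)"
    show "klinear (A x y) (A y y) (\<lambda>u. ?F u v)"
      by (rule klinear_comp[OF s_lin sh_m_lin1[OF SH yX xX yX klin_in[OF h v]]])
  next
    fix u assume u: "u \<in> mcarrier (A x y)"
    show "klinear (A x y) (A y y) (?F u)"
      by (rule klinear_comp[OF h sh_m_lin2[OF SH yX xX yX s_in[OF u]]])
  qed
  have Fin: "set (map (\<lambda>(u, v). ?F u v) (delta x y a)) \<subseteq> mcarrier (A y y)" if a: "a \<in> mcarrier (A x y)" for a
  proof
    fix z assume "z \<in> set (map (\<lambda>(u, v). ?F u v) (delta x y a))"
    then obtain u v where uv: "(u,v) \<in> set (delta x y a)" and z: "z = ?F u v" by auto
    show "z \<in> mcarrier (A y y)" using din[OF a uv] z F unfolding bilin_def by simp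
  qed
  show ?thesis
    unfolding klinear_def
  proof (intro conjI ballI allI)
    fix a assume "a \<in> mcarrier (A x y)" then show "Ro h a \<in> mcarrier (A y y)" by (rule Rop_in[OF h])
  next
    fix a a' assume a: "a \<in> mcarrier (A x y)" and a': "a' \<in> mcarrier (A x y)"
    have "Ro h (madd (A x y) a a') = msum (A y y) (map (\<lambda>(u, v). ?F u v) (delta x y a @ delta x y a'))"
      unfolding Rop_def
      by (rule tensor2_msum[OF Mxy Myy Be F]) (use co2[OF Cxy] a a' in simp)
    also have "\<dots> = madd (A y y) (Ro h a) (Ro h a')"
      unfolding Rop_def using msum_append[OF Myy Fin[OF a] Fin[OF a']] by simp
    finally show "Ro h (madd (A x y) a a') = madd (A y y) (Ro h a) (Ro h a')" .
  next
    fix c a assume a: "a \<in> mcarrier (A x y)"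
    have "Ro h (msmult (A x y) c a)
        = msum (A y y) (map (\<lambda>(u, v). ?F u v) (map (\<lambda>(u, v). (msmult (A x y) c u, v)) (delta x y a)))"
      unfolding Rop_def
      by (rule tensor2_msum[OF Mxy Myy Be F]) (use co3[OF Cxy] a in simp)
    also have "\<dots> = msum (A y y) (map (\<lambda>uv. msmult (A y y) c ((\<lambda>(u, v). ?F u v) uv)) (delta x y a))"
    proof -
      have "?F (msmult (A x y) c u) v = msmult (A y y) c (?F u v)" if uv: "(u, v) \<in> set (delta x y a)" for u v
      proof -
        have "u \<in> mcarrier (A x y)" "v \<in> mcarrier (A x y)" using din[OF a uv] by auto
        moreover have "klinear (A x y) (A y y) (\<lambda>u. ?F u v)" using F calculation unfolding bilin_def by simp
        ultimately show ?thesis unfolding klinear_def by simp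
      qed
      thus ?thesis by (auto intro!: arg_cong[where f="msum (A y y)"])
    qed
    also have "\<dots> = msmult (A y y) c (Ro h a)"
      unfolding Rop_def by (rule msum_smult[OF Myy]) (use Fin[OF a] in auto)
    finally show "Ro h (msmult (A x y) c a) = msmult (A y y) c (Ro h a)" .
  qed
qed

lemma Lop_cong:
  assumes g: "\<And>v. v \<in> mcarrier (A x y) \<Longrightarrow> g v = g' v" and a: "a \<in> mcarrier (A x y)"
  shows "Lo g a = Lo g' a"
  unfolding Lop_def
proof (rule arg_cong[where f="msum (A x y)"], rule map_cong[OF refl])
  fix uv assume uv: "uv \<in> set (delta x y a)"
  obtain u v where e: "uv = (u, v)" by (cases uv)
  show "(case uv of (u, v) \<Rightarrow> m x y y u (g v)) = (case uv of (u, v) \<Rightarrow> m x y y u (g' v))"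
    using din[OF a uv[unfolded e]] g e by simp
qed

lemma Rop_cong:
  assumes g: "\<And>v. v \<in> mcarrier (A x y) \<Longrightarrow> g v = g' v" and a: "a \<in> mcarrier (A x y)"
  shows "Ro g a = Ro g' a"
  unfolding Rop_def
proof (rule arg_cong[where f="msum (A y y)"], rule map_cong[OF refl])
  fix uv assume uv: "uv \<in> set (delta x y a)"
  obtain u v where e: "uv = (u, v)" by (cases uv)
  show "(case uv of (u, v) \<Rightarrow> m y x y (s x y u) (g v)) = (case uv of (u, v) \<Rightarrow> m y x y (s x y u) (g' v))"
    using din[OF a uv[unfolded e]] g e by simp
qed


lemma LR:
  assumes h: "klinear (A x y) (A x y) h" and a: "a \<in> mcarrier (A x y)"
  shows "Lo (Ro h) a = h a"
proof -
  let ?F3 = "\<lambda>u p q. m x y y u (m y x y (s x y p) (h q))"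
  have hin: "\<And>q. q \<in> mcarrier (A x y) \<Longrightarrow> h q \<in> mcarrier (A x y)" using klin_in[OF h] .
  have inner_in: "\<And>p q. p \<in> mcarrier (A x y) \<Longrightarrow> q \<in> mcarrier (A x y) \<Longrightarrow> m y x y (s x y p) (h q) \<in> mcarrier (A y y)"
    using sh_m_in[OF SH yX xX yX] s_in hin by blast
  have F3in: "\<And>u p q. u \<in> mcarrier (A x y) \<Longrightarrow> p \<in> mcarrier (A x y) \<Longrightarrow> q \<in> mcarrier (A x y) \<Longrightarrow> ?F3 u p q \<in> mcarrier (A x y)"
    using sh_m_in[OF SH xX yX yX] inner_in by blast
  have T: "trilin (A x y) (A x y) ?F3"
    unfolding trilin_def
  proof (intro conjI ballI)
    fix u p q assume "u \<in> mcarrier (A x y)" "p \<in> mcarrier (A x y)" "q \<in> mcarrier (A x y)"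
    then show "?F3 u p q \<in> mcarrier (A x y)" by (rule F3in)
  next
    fix p q assume "p \<in> mcarrier (A x y)" "q \<in> mcarrier (A x y)"
    then show "klinear (A x y) (A x y) (\<lambda>u. ?F3 u p q)" by (intro sh_m_lin1[OF SH xX yX yX] inner_in)
  next
    fix u q assume u: "u \<in> mcarrier (A x y)" and q: "q \<in> mcarrier (A x y)"
    show "klinear (A x y) (A x y) (\<lambda>p. ?F3 u p q)"
      by (rule klinear_comp[OF s_lin klinear_comp[OF sh_m_lin1[OF SH yX xX yX hin[OF q]] sh_m_lin2[OF SH xX yX yX u]]])
  next
    fix u p assume u: "u \<in> mcarrier (A x y)" and p: "p \<in> mcarrier (A x y)"
    show "klinear (A x y) (A x y) (?F3 u p)"
      by (rule klinear_comp[OF h klinear_comp[OF sh_m_lin2[OF SH yX xX yX s_in[OF p]] sh_m_lin2[OF SH xX yX yX u]]])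
  qed
  let ?\<Phi> = "\<lambda>t. ?F3 (t!0) (t!1) (t!2)"
  have "Lo (Ro h) a = msum (A x y) (map (\<lambda>(u, w). msum (A x y) (map (\<lambda>(p, q). ?F3 u p q) (delta x y w))) (delta x y a))"
    unfolding Lop_def
  proof (rule arg_cong[where f="msum (A x y)"], rule map_pair_cong)
    fix u w assume uw: "(u, w) \<in> set (delta x y a)"
    note d = din[OF a uw]
    have "m x y y u (Ro h w) = msum (A x y) (map (\<lambda>z. m x y y u ((\<lambda>(p, q). m y x y (s x y p) (h q)) z)) (delta x y w))"
      unfolding Rop_def
      by (rule klinear_msum_map[OF Myy Mxy sh_m_lin2[OF SH xX yX yX conjunct1[OF d]]])
        (rule pairs_in[OF conjunct2[OF d]], rule inner_in; assumption)
    also have "\<dots> = msum (A x y) (map (\<lambda>(p, q). ?F3 u p q) (delta x y w))"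
      by (simp add: case_prod_unfold)
    finally show "m x y y u (Ro h w) = msum (A x y) (map (\<lambda>(p, q). ?F3 u p q) (delta x y w))" .
  qed
  also have "\<dots> = msum (A x y) (map ?\<Phi> (concat (map (\<lambda>(u, v). map (\<lambda>(p, q). [u, p, q]) (delta x y v)) (delta x y a))))"
  proof -
    have "msum (A x y) (map ?\<Phi> (concat (map (\<lambda>(u, v). map (\<lambda>(p, q). [u, p, q]) (delta x y v)) (delta x y a))))
       = msum (A x y) (map (\<lambda>(u, v). msum (A x y) (map (\<lambda>(p, q). ?\<Phi> [u, p, q]) (delta x y v))) (delta x y a))"
      by (rule msum_concat_pairs[OF Mxy, where D="\<lambda>u v. delta x y v" and W="\<lambda>u v p q. [u, p, q]"])
        (rule pairs2_in(1)[OF a]; simp add: F3in)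
    thus ?thesis by simp
  qed
  also have "\<dots> = msum (A x y) (map ?\<Phi> (concat (map (\<lambda>(u, v). map (\<lambda>(p, q). [p, q, v]) (delta x y u)) (delta x y a))))"
    by (rule tensor_msum_eq[OF Mxy Mxy Bb trilin_mlinN[OF T], symmetric]) (use co6[OF Cxy] a in simp)
  also have "\<dots> = msum (A x y) (map (\<lambda>(u, w). msum (A x y) (map (\<lambda>(p, q). ?F3 p q w) (delta x y u))) (delta x y a))"
  proof -
    have "msum (A x y) (map ?\<Phi> (concat (map (\<lambda>(u, v). map (\<lambda>(p, q). [p, q, v]) (delta x y u)) (delta x y a))))
       = msum (A x y) (map (\<lambda>(u, v). msum (A x y) (map (\<lambda>(p, q). ?\<Phi> [p, q, v]) (delta x y u))) (delta x y a))"
      by (rule msum_concat_pairs[OF Mxy, where D="\<lambda>u v. delta x y u" and W="\<lambda>u v p q. [p, q, v]"])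
        (rule pairs2_in(2)[OF a]; simp add: F3in)
    thus ?thesis by simp
  qed
  also have "\<dots> = msum (A x y) (map (\<lambda>(u, w). msmult (A x y) (eps x y u) (h w)) (delta x y a))"
  proof (rule arg_cong[where f="msum (A x y)"], rule map_pair_cong)
    fix u w assume uw: "(u, w) \<in> set (delta x y a)"
    note d = din[OF a uw]
    have hw: "h w \<in> mcarrier (A x y)" using d by (simp add: hin)
    have "msum (A x y) (map (\<lambda>(p, q). ?F3 p q w) (delta x y u))
        = msum (A x y) (map (\<lambda>(p, q). m x x y (m x y x p (s x y q)) (h w)) (delta x y u))"
    proof (rule arg_cong[where f="msum (A x y)"], rule map_pair_cong)
      fix p q assume pq: "(p, q) \<in> set (delta x y u)"
      note d2 = din[OF _ pq] d
      show "?F3 p q w = m x x y (m x y x p (s x y q)) (h w)"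
        using sh_assoc[OF SH xX yX xX yX, of p "s x y q" "h w"] d2 s_in hw by simp
    qed
    also have "\<dots> = msum (A x y) (map (\<lambda>z. m x x y ((\<lambda>(p, q). m x y x p (s x y q)) z) (h w)) (delta x y u))"
      by (simp add: case_prod_unfold)
    also have "\<dots> = m x x y (msum (A x x) (map (\<lambda>(p, q). m x y x p (s x y q)) (delta x y u))) (h w)"
      by (rule klinear_msum_map[OF Mxx Mxy sh_m_lin1[OF SH xX xX yX hw], symmetric])
        (rule pairs_in[OF conjunct1[OF d]], rule sh_m_in[OF SH xX yX xX], assumption, erule s_in)
    also have "\<dots> = m x x y (msmult (A x x) (eps x y u) (j x)) (h w)" using RA_eq d by simp
    also have "\<dots> = msmult (A x y) (eps x y u) (m x x y (j x) (h w))"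
      using sh_m_lin1[OF SH xX xX yX hw] sh_j_in[OF SH xX] unfolding klinear_def by simp
    also have "\<dots> = msmult (A x y) (eps x y u) (h w)" using sh_unit_l[OF SH xX yX hw] by simp
    finally show "msum (A x y) (map (\<lambda>(p, q). ?F3 p q w) (delta x y u)) = msmult (A x y) (eps x y u) (h w)" .
  qed
  also have "\<dots> = msum (A x y) (map (\<lambda>z. h ((\<lambda>(u, w). msmult (A x y) (eps x y u) w) z)) (delta x y a))"
  proof (rule arg_cong[where f="msum (A x y)"])
    show "map (\<lambda>(u, w). msmult (A x y) (eps x y u) (h w)) (delta x y a)
        = map (\<lambda>z. h ((\<lambda>(u, w). msmult (A x y) (eps x y u) w) z)) (delta x y a)"
    proof (rule map_cong[OF refl])
      fix z assume z: "z \<in> set (delta x y a)"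
      obtain u w where zz: "z = (u, w)" by (cases z)
      show "(\<lambda>(u, w). msmult (A x y) (eps x y u) (h w)) z = h ((\<lambda>(u, w). msmult (A x y) (eps x y u) w) z)"
        using h din[OF a z[unfolded zz]] zz unfolding klinear_def by simp
    qed
  qed
  also have "\<dots> = h (msum (A x y) (map (\<lambda>(u, w). msmult (A x y) (eps x y u) w) (delta x y a)))"
    by (rule klinear_msum_map[OF Mxy Mxy h, symmetric]) (rule pairs_in[OF a], erule kmD_3[OF Mxy])
  also have "\<dots> = h a" using co7[OF Cxy] a by simp
  finally show ?thesis .
qed

lemma Lg0:
  assumes a: "a \<in> mcarrier (A x y)"
  shows "Lo (\<lambda>v. msmult (A y y) (eps x y v) (j y)) a = a"
proof -
  have "Lo (\<lambda>v. msmult (A y y) (eps x y v) (j y)) a = msum (A x y) (map (\<lambda>(u, v). msmult (A x y) (eps x y v) u) (delta x y a))"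
    unfolding Lop_def
  proof (rule arg_cong[where f="msum (A x y)"], rule map_pair_cong)
    fix u v assume uv: "(u, v) \<in> set (delta x y a)"
    note d = din[OF a uv]
    have "m x y y u (msmult (A y y) (eps x y v) (j y)) = msmult (A x y) (eps x y v) (m x y y u (j y))"
      using sh_m_lin2[OF SH xX yX yX, of u] d sh_j_in[OF SH yX] unfolding klinear_def by simp
    also have "\<dots> = msmult (A x y) (eps x y v) u" using sh_unit_r[OF SH xX yX, of u] d by simp
    finally show "m x y y u (msmult (A y y) (eps x y v) (j y)) = msmult (A x y) (eps x y v) u" .
  qed
  also have "\<dots> = a" using co8[OF Cxy] a by simp
  finally show ?thesis .
qed

end
lemma smult_smult_mat: "(a::'k::comm_ring_1) \<cdot>\<^sub>m (b \<cdot>\<^sub>m B) = (a * b) \<cdot>\<^sub>m B"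
  by (rule eq_matI) (auto simp: mult.assoc)

lemma one_smult_mat': "(1::'k::comm_ring_1) \<cdot>\<^sub>m B = B"
  by (rule eq_matI) auto

lemma one_sided_inv_comm:
  fixes A B :: "'k::comm_ring_1 mat"
  assumes A: "A \<in> carrier_mat n n" and B: "B \<in> carrier_mat n n" and AB: "A * B = 1\<^sub>m n"
  shows "B * A = 1\<^sub>m n"
proof -
  have d: "det A * det B = 1" using arg_cong[OF AB, of det] det_mult[OF A B] by simp
  have adjA: "adj_mat A \<in> carrier_mat n n" "adj_mat A * A = det A \<cdot>\<^sub>m 1\<^sub>m n" using adj_mat[OF A] by auto
  have "adj_mat A = adj_mat A * (A * B)" using AB adjA by simp
  also have "\<dots> = (adj_mat A * A) * B" using A B adjA by (metis assoc_mult_mat)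
  also have "\<dots> = det A \<cdot>\<^sub>m B" using adjA B mult_smult_assoc_mat[OF one_carrier_mat B, of "det A"] by simp
  finally have e: "adj_mat A = det A \<cdot>\<^sub>m B" .
  have "det B \<cdot>\<^sub>m adj_mat A = B" using e d B
    by (simp add: smult_smult_mat mult.commute one_smult_mat')
  hence "B * A = (det B \<cdot>\<^sub>m adj_mat A) * A" by simp
  also have "\<dots> = det B \<cdot>\<^sub>m (adj_mat A * A)" using adjA A by (simp add: mult_smult_assoc_mat)
  also have "\<dots> = 1\<^sub>m n" using adjA d by (simp add: smult_smult_mat mult.commute one_smult_mat')
  finally show ?thesis .
qed



definition unitv :: "nat \<Rightarrow> nat \<Rightarrow> 'k::comm_ring_1" where
  "unitv c = (\<lambda>i. if i = c then 1 else 0)"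

lemma comm_inv_maps:
  fixes F G :: "(nat \<Rightarrow> 'k::comm_ring_1) \<Rightarrow> nat \<Rightarrow> 'k"
  assumes F: "\<And>v r. F v r = (\<Sum>c<N. v c * F (unitv c) r)"
    and G: "\<And>v r. G v r = (\<Sum>c<N. v c * G (unitv c) r)"
    and FG: "\<And>c r. c < N \<Longrightarrow> r < N \<Longrightarrow> F (G (unitv c)) r = unitv c r"
  shows "r < N \<Longrightarrow> G (F V) r = V r"
proof -
  assume r: "r < N"
  define MF where "MF = mat N N (\<lambda>(r,c). F (unitv c) r)"
  define MG where "MG = mat N N (\<lambda>(r,c). G (unitv c) r)"
  have cF: "MF \<in> carrier_mat N N" and cG: "MG \<in> carrier_mat N N" by (auto simp: MF_def MG_def)
  have "MF * MG = 1\<^sub>m N"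
  proof (rule eq_matI)
    fix i j assume i: "i < dim_row (1\<^sub>m N :: 'k mat)" and j: "j < dim_col (1\<^sub>m N :: 'k mat)"
    have "(MF * MG) $$ (i,j) = (\<Sum>k<N. F (unitv k) i * G (unitv j) k)"
      using i j by (simp add: MF_def MG_def scalar_prod_def atLeast0LessThan)
    also have "\<dots> = F (G (unitv j)) i" by (subst F) (simp add: mult.commute)
    also have "\<dots> = unitv j i" using FG i j by simp
    finally show "(MF * MG) $$ (i,j) = 1\<^sub>m N $$ (i,j)" using i j by (simp add: unitv_def)
  qed (auto simp: MF_def MG_def)
  hence GF: "MG * MF = 1\<^sub>m N" using one_sided_inv_comm[OF cF cG] by simp
  have u: "G (F (unitv c)) r = unitv c r" if c: "c < N" for c
  proof -
    have "G (F (unitv c)) r = (\<Sum>k<N. F (unitv c) k * G (unitv k) r)" by (subst G) simp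
    also have "\<dots> = (MG * MF) $$ (r,c)"
      using r c by (simp add: MF_def MG_def scalar_prod_def atLeast0LessThan mult.commute)
    also have "\<dots> = unitv c r" using GF r c by (simp add: unitv_def)
    finally show ?thesis .
  qed
  have "G (F V) r = (\<Sum>k<N. F V k * G (unitv k) r)" by (subst G) simp
  also have "\<dots> = (\<Sum>k<N. (\<Sum>c<N. V c * F (unitv c) k) * G (unitv k) r)" by (subst F) simp
  also have "\<dots> = (\<Sum>c<N. V c * (\<Sum>k<N. F (unitv c) k * G (unitv k) r))"
    by (simp add: sum_distrib_left sum_distrib_right mult.assoc) (rule sum.swap)
  also have "\<dots> = (\<Sum>c<N. V c * G (F (unitv c)) r)"
    by (subst (2) G) simp
  also have "\<dots> = (\<Sum>c<N. V c * unitv c r)" using u by simp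
  also have "\<dots> = (\<Sum>c<N. if c = r then V c else 0)" by (rule sum.cong) (auto simp: unitv_def)
  also have "\<dots> = V r" using r by simp
  finally show ?thesis .
qed

definition vmap :: "('k::comm_ring_1, 'a) kmod \<Rightarrow> (nat \<Rightarrow> 'a) \<Rightarrow> ('k, 'b) kmod \<Rightarrow> (nat \<Rightarrow> 'b) \<Rightarrow> nat
    \<Rightarrow> (nat \<Rightarrow> 'k) \<Rightarrow> 'a \<Rightarrow> 'b" where
  "vmap M b N e n V a = expn N e n (\<lambda>j. \<Sum>i<n. coord M b n a i * V (i * n + j))"

definition mmat :: "('k::comm_ring_1, 'b) kmod \<Rightarrow> (nat \<Rightarrow> 'b) \<Rightarrow> (nat \<Rightarrow> 'a) \<Rightarrow> nat \<Rightarrow> ('a \<Rightarrow> 'b) \<Rightarrow> nat \<Rightarrow> 'k" where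
  "mmat N e b n f r = (if r < n * n then coord N e n (f (b (r div n))) (r mod n) else 0)"

lemma idx:
  assumes "i < n" "q < (n::nat)"
  shows "i * n + q < n * n" "(i * n + q) div n = i" "(i * n + q) mod n = q"
proof -
  have "i * n + q < i * n + n" using assms by simp
  also have "\<dots> = Suc i * n" by simp
  also have "\<dots> \<le> n * n" using assms(1) by (intro mult_right_mono) auto
  finally show "i * n + q < n * n" .
  show "(i * n + q) div n = i" "(i * n + q) mod n = q" using assms by auto
qed

lemma sum_lessThan_add: "(\<Sum>c<m + (k::nat). f c) = (\<Sum>c<m. f c) + (\<Sum>j<k. f (m + j))"
  by (induction k) (simp_all add: add.assoc)

lemma sum_idx: "(\<Sum>c<(a::nat) * n. f c) = (\<Sum>i<a. \<Sum>j<n. f (i * n + j))"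
proof (induction a)
  case (Suc a)
  have "(\<Sum>c<Suc a * n. f c) = (\<Sum>c<a * n + n. f c)" by (simp add: add.commute)
  also have "\<dots> = (\<Sum>c<a * n. f c) + (\<Sum>j<n. f (a * n + j))" by (rule sum_lessThan_add)
  finally show ?case using Suc by simp
qed simp

lemma shape_lin:
  fixes P K :: "'p \<Rightarrow> nat \<Rightarrow> 'k::comm_ring_1"
  shows "sum_list (map (\<lambda>x. \<Sum>j<n. (\<Sum>i<n. P x i * V (i * n + j)) * K x j) L)
       = (\<Sum>i<n. \<Sum>j<n. V (i * n + j) * sum_list (map (\<lambda>x. P x i * K x j) L))"
proof (induction L)
  case (Cons x L)
  have "(\<Sum>j<n. (\<Sum>i<n. P x i * V (i * n + j)) * K x j) = (\<Sum>j<n. \<Sum>i<n. V (i * n + j) * (P x i * K x j))"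
    by (intro sum.cong refl) (simp add: sum_distrib_left sum_distrib_right mult_ac)
  also have "\<dots> = (\<Sum>i<n. \<Sum>j<n. V (i * n + j) * (P x i * K x j))" by (rule sum.swap)
  finally show ?case using Cons by (simp add: distrib_left sum.distrib)
qed simp

lemma shape_flin:
  fixes F :: "(nat \<Rightarrow> 'k::comm_ring_1) \<Rightarrow> nat \<Rightarrow> 'k"
  assumes F: "\<And>V r. F V r = (if r < n * n then sum_list (map (\<lambda>x. \<Sum>j<n. (\<Sum>i<n. P r x i * V (i * n + j)) * K r x j) (L r)) else 0)"
  shows "F V r = (\<Sum>c<n * n. V c * F (unitv c) r)"
proof (cases "r < n * n")
  case True
  define Q where "Q i j = sum_list (map (\<lambda>x. P r x i * K r x j) (L r))" for i j
  have FW: "F W r = (\<Sum>c<n * n. W c * Q (c div n) (c mod n))" for W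
  proof -
    have "F W r = (\<Sum>i<n. \<Sum>j<n. W (i * n + j) * Q i j)" using True by (simp add: F shape_lin Q_def)
    also have "\<dots> = (\<Sum>i<n. \<Sum>j<n. W (i * n + j) * Q ((i * n + j) div n) ((i * n + j) mod n))"
      by (intro sum.cong refl) (simp add: idx)
    also have "\<dots> = (\<Sum>c<n * n. W c * Q (c div n) (c mod n))" by (rule sum_idx[symmetric])
    finally show ?thesis .
  qed
  have U: "F (unitv c) r = Q (c div n) (c mod n)" if c: "c < n * n" for c
  proof -
    have "F (unitv c) r = (\<Sum>c'<n * n. if c' = c then Q (c' div n) (c' mod n) else 0)"
      unfolding FW by (intro sum.cong refl) (simp add: unitv_def)
    also have "\<dots> = Q (c div n) (c mod n)" using c by simp
    finally show ?thesis .
  qed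
  have "(\<Sum>c<n * n. V c * F (unitv c) r) = (\<Sum>c<n * n. V c * Q (c div n) (c mod n))"
    by (intro sum.cong refl) (simp add: U)
  then show ?thesis using FW by simp
next
  case False
  then show ?thesis by (simp add: F)
qed

section \<open>Coordinates of maps\<close>

context
  fixes M :: "('k::comm_ring_1, 'a) kmod" and N :: "('k, 'b) kmod" and b e n
  assumes M: "is_kmodule M" and N: "is_kmodule N" and Bb: "is_basis M b n" and Be: "is_basis N e n"
begin

lemma coord_vmap: "q < n \<Longrightarrow> coord N e n (vmap M b N e n V a) q = (\<Sum>i<n. coord M b n a i * V (i * n + q))"
  unfolding vmap_def by (rule coord_expn[OF N Be])

lemma vmap_in: "vmap M b N e n V a \<in> mcarrier N"
  unfolding vmap_def by (rule expn_in[OF N Be])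

lemma vmap_lin: "klinear M N (vmap M b N e n V)"
  unfolding klinear_def
proof (intro conjI ballI allI)
  fix a show "vmap M b N e n V a \<in> mcarrier N" by (rule vmap_in)
next
  fix a a' assume a: "a \<in> mcarrier M" and a': "a' \<in> mcarrier M"
  show "vmap M b N e n V (madd M a a') = madd N (vmap M b N e n V a) (vmap M b N e n V a')"
  proof (rule basis_ext[OF Be vmap_in kmD_2[OF N vmap_in vmap_in]])
    fix q assume q: "q < n"
    show "coord N e n (vmap M b N e n V (madd M a a')) q = coord N e n (madd N (vmap M b N e n V a) (vmap M b N e n V a')) q"
      by (simp add: coord_add[OF N Be vmap_in vmap_in] coord_vmap[OF q] coord_add[OF M Bb a a']
          distrib_right sum.distrib)
  qed
next
  fix c a assume a: "a \<in> mcarrier M"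
  show "vmap M b N e n V (msmult M c a) = msmult N c (vmap M b N e n V a)"
  proof (rule basis_ext[OF Be vmap_in kmD_3[OF N vmap_in]])
    fix q assume q: "q < n"
    show "coord N e n (vmap M b N e n V (msmult M c a)) q = coord N e n (msmult N c (vmap M b N e n V a)) q"
      by (simp add: coord_smult[OF N Be vmap_in] coord_vmap[OF q] coord_smult[OF M Bb a]
          sum_distrib_left mult.assoc)
  qed
qed

lemma vmap_mmat:
  assumes f: "klinear M N f" and a: "a \<in> mcarrier M"
  shows "vmap M b N e n (mmat N e b n f) a = f a"
proof (rule basis_ext[OF Be vmap_in])
  show "f a \<in> mcarrier N" using f a unfolding klinear_def by blast
next
  fix q assume q: "q < n"
  have "coord N e n (vmap M b N e n (mmat N e b n f) a) q = (\<Sum>i<n. coord M b n a i * coord N e n (f (b i)) q)"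
    unfolding coord_vmap[OF q] by (intro sum.cong refl) (simp add: mmat_def idx q)
  also have "\<dots> = coord N e n (f a) q"
    by (rule kfun_expand[OF M Bb kfun_comp[OF f kfun_coord[OF N Be]] a, symmetric])
  finally show "coord N e n (vmap M b N e n (mmat N e b n f) a) q = coord N e n (f a) q" .
qed

end



lemma idx2: assumes "r < n * (n::nat)" shows "r div n < n" "r mod n < n" "r div n * n + r mod n = r"
proof -
  have n: "n > 0" using assms by (cases n) auto
  show "r div n < n" using assms by (simp add: less_mult_imp_div_less)
  show "r mod n < n" using n by simp
  show "r div n * n + r mod n = r" by simp
qed

context LA
begin

abbreviation "cb \<equiv> coord (A x y) b n"
abbreviation "ce \<equiv> coord (A y y) e n"
abbreviation "gV \<equiv> vmap (A x y) b (A y y) e n"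
abbreviation "hV \<equiv> vmap (A x y) b (A x y) b n"

definition Lv :: "(nat \<Rightarrow> 'k) \<Rightarrow> nat \<Rightarrow> 'k" where "Lv V = mmat (A x y) b b n (Lo (gV V))"
definition Rv :: "(nat \<Rightarrow> 'k) \<Rightarrow> nat \<Rightarrow> 'k" where "Rv V = mmat (A y y) e b n (Ro (hV V))"

lemma Lv_shape:
  "Lv V r = (if r < n * n then sum_list (map (\<lambda>z. \<Sum>j<n. (\<Sum>i<n. cb (snd z) i * V (i * n + j))
       * cb (m x y y (fst z) (e j)) (r mod n)) (delta x y (b (r div n)))) else 0)"
proof (cases "r < n * n")
  case True
  define p where "p = r div n"
  define q where "q = r mod n"
  have p: "p < n" and q: "q < n" using idx2[OF True] by (auto simp: p_def q_def)
  have bp: "b p \<in> mcarrier (A x y)" using basis_in[OF Bb p] .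
  have "Lv V r = cb (Lo (gV V) (b p)) q" using True by (simp add: Lv_def mmat_def p_def q_def)
  also have "\<dots> = sum_list (map (\<lambda>t. cb t q) (map (\<lambda>(u, v). m x y y u (gV V v)) (delta x y (b p))))"
    unfolding Lop_def
    by (rule kfun_msum[OF Mxy kfun_coord[OF Mxy Bb]], rule pairs_in'[OF bp],
        rule sh_m_in[OF SH xX yX yX], assumption, rule vmap_in[OF Mxy Myy Bb Be])
  also have "\<dots> = sum_list (map (\<lambda>z. \<Sum>j<n. (\<Sum>i<n. cb (snd z) i * V (i * n + j))
       * cb (m x y y (fst z) (e j)) q) (delta x y (b p)))"
  proof (simp only: map_map, rule arg_cong[where f=sum_list], rule map_cong[OF refl])
    fix z assume z: "z \<in> set (delta x y (b p))"
    obtain u v where zz: "z = (u, v)" by (cases z)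
    note d = din[OF bp z[unfolded zz]]
    have "cb (m x y y u (gV V v)) q = (\<Sum>j<n. ce (gV V v) j * cb (m x y y u (e j)) q)"
      by (rule kfun_expand[OF Myy Be kfun_comp[OF sh_m_lin2[OF SH xX yX yX] kfun_coord[OF Mxy Bb]] vmap_in[OF Mxy Myy Bb Be]])
        (use d in simp)
    also have "\<dots> = (\<Sum>j<n. (\<Sum>i<n. cb v i * V (i * n + j)) * cb (m x y y u (e j)) q)"
      by (intro sum.cong refl) (simp add: coord_vmap[OF Mxy Myy Bb Be])
    finally show "((\<lambda>t. cb t q) \<circ> (\<lambda>(u, v). m x y y u (gV V v))) z
        = (\<Sum>j<n. (\<Sum>i<n. cb (snd z) i * V (i * n + j)) * cb (m x y y (fst z) (e j)) q)"
      using zz by simp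
  qed
  finally show ?thesis using True by (simp add: p_def q_def)
qed (simp add: Lv_def mmat_def)

lemma Rv_shape:
  "Rv V r = (if r < n * n then sum_list (map (\<lambda>z. \<Sum>j<n. (\<Sum>i<n. cb (snd z) i * V (i * n + j))
       * ce (m y x y (s x y (fst z)) (b j)) (r mod n)) (delta x y (b (r div n)))) else 0)"
proof (cases "r < n * n")
  case True
  define p where "p = r div n"
  define q where "q = r mod n"
  have p: "p < n" and q: "q < n" using idx2[OF True] by (auto simp: p_def q_def)
  have bp: "b p \<in> mcarrier (A x y)" using basis_in[OF Bb p] .
  have "Rv V r = ce (Ro (hV V) (b p)) q" using True by (simp add: Rv_def mmat_def p_def q_def)
  also have "\<dots> = sum_list (map (\<lambda>t. ce t q) (map (\<lambda>(u, v). m y x y (s x y u) (hV V v)) (delta x y (b p))))"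
    unfolding Rop_def
    by (rule kfun_msum[OF Myy kfun_coord[OF Myy Be]], rule pairs_in'[OF bp],
        rule sh_m_in[OF SH yX xX yX], erule s_in, rule vmap_in[OF Mxy Mxy Bb Bb])
  also have "\<dots> = sum_list (map (\<lambda>z. \<Sum>j<n. (\<Sum>i<n. cb (snd z) i * V (i * n + j))
       * ce (m y x y (s x y (fst z)) (b j)) q) (delta x y (b p)))"
  proof (simp only: map_map, rule arg_cong[where f=sum_list], rule map_cong[OF refl])
    fix z assume z: "z \<in> set (delta x y (b p))"
    obtain u v where zz: "z = (u, v)" by (cases z)
    note d = din[OF bp z[unfolded zz]]
    have su: "s x y u \<in> mcarrier (A y x)" using d s_in by simp
    have "ce (m y x y (s x y u) (hV V v)) q = (\<Sum>j<n. cb (hV V v) j * ce (m y x y (s x y u) (b j)) q)"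
      by (rule kfun_expand[OF Mxy Bb kfun_comp[OF sh_m_lin2[OF SH yX xX yX su] kfun_coord[OF Myy Be]] vmap_in[OF Mxy Mxy Bb Bb]])
    also have "\<dots> = (\<Sum>j<n. (\<Sum>i<n. cb v i * V (i * n + j)) * ce (m y x y (s x y u) (b j)) q)"
      by (intro sum.cong refl) (simp add: coord_vmap[OF Mxy Mxy Bb Bb])
    finally show "((\<lambda>t. ce t q) \<circ> (\<lambda>(u, v). m y x y (s x y u) (hV V v))) z
        = (\<Sum>j<n. (\<Sum>i<n. cb (snd z) i * V (i * n + j)) * ce (m y x y (s x y (fst z)) (b j)) q)"
      using zz by simp
  qed
  finally show ?thesis using True by (simp add: p_def q_def)
qed (simp add: Rv_def mmat_def)

lemma Lv_flin: "Lv V r = (\<Sum>c<n * n. V c * Lv (unitv c) r)"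
  by (rule shape_flin[where P="\<lambda>r z i. cb (snd z) i" and K="\<lambda>r z j. cb (m x y y (fst z) (e j)) (r mod n)"
        and L="\<lambda>r. delta x y (b (r div n))"]) (rule Lv_shape)

lemma Rv_flin: "Rv V r = (\<Sum>c<n * n. V c * Rv (unitv c) r)"
  by (rule shape_flin[where P="\<lambda>r z i. cb (snd z) i" and K="\<lambda>r z j. ce (m y x y (s x y (fst z)) (b j)) (r mod n)"
        and L="\<lambda>r. delta x y (b (r div n))"]) (rule Rv_shape)

lemma LRv:
  assumes r: "r < n * n"
  shows "Lv (Rv V) r = V r"
proof -
  define p where "p = r div n"
  define q where "q = r mod n"
  have p: "p < n" and q: "q < n" using idx2[OF r] by (auto simp: p_def q_def)
  have bp: "b p \<in> mcarrier (A x y)" using basis_in[OF Bb p] .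
  have hl: "klinear (A x y) (A x y) (hV V)" by (rule vmap_lin[OF Mxy Mxy Bb Bb])
  have RL: "klinear (A x y) (A y y) (Ro (hV V))" by (rule Rop_lin[OF hl])
  have "Lv (Rv V) r = cb (Lo (gV (Rv V)) (b p)) q" using r by (simp add: Lv_def mmat_def p_def q_def)
  also have "Lo (gV (Rv V)) (b p) = Lo (Ro (hV V)) (b p)"
    by (rule Lop_cong[OF _ bp]) (simp add: Rv_def vmap_mmat[OF Mxy Myy Bb Be RL])
  also have "\<dots> = hV V (b p)" by (rule LR[OF hl bp])
  also have "cb (hV V (b p)) q = (\<Sum>i<n. cb (b p) i * V (i * n + q))" by (rule coord_vmap[OF Mxy Mxy Bb Bb q])
  also have "\<dots> = (\<Sum>i<n. if i = p then V (i * n + q) else 0)"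
    by (intro sum.cong refl) (simp add: coord_basis[OF Mxy Bb p])
  also have "\<dots> = V (p * n + q)" using p by simp
  also have "p * n + q = r" using idx2[OF r] by (simp add: p_def q_def)
  finally show ?thesis .
qed

lemma g0_lin: "klinear (A x y) (A y y) (\<lambda>v. msmult (A y y) (eps x y v) (j y))"
  unfolding klinear_def
  using co4[OF Cxy] co5[OF Cxy] kmD_3[OF Myy] kmD_9[OF Myy] kmD_10[OF Myy] sh_j_in[OF SH yX] by simp

lemma left_xy:
  assumes a: "a \<in> mcarrier (A x y)"
  shows "msum (A y y) (map (\<lambda>(u, v). m y x y (s x y u) v) (delta x y a)) = msmult (A y y) (eps x y a) (j y)"
proof -
  let ?g0 = "\<lambda>v. msmult (A y y) (eps x y v) (j y)"
  define V0 where "V0 = mmat (A y y) e b n ?g0"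
  have inv: "Rv (Lv V0) r = V0 r" if "r < n * n" for r
    by (rule comm_inv_maps[OF Lv_flin Rv_flin LRv that])
  have L0: "Lv V0 = mmat (A x y) b b n (\<lambda>v. v)"
  proof
    fix r show "Lv V0 r = mmat (A x y) b b n (\<lambda>v. v) r"
    proof (cases "r < n * n")
      case True
      have bp: "b (r div n) \<in> mcarrier (A x y)" using basis_in[OF Bb idx2(1)[OF True]] .
      have "Lo (gV V0) (b (r div n)) = Lo ?g0 (b (r div n))"
        by (rule Lop_cong[OF _ bp]) (simp add: V0_def vmap_mmat[OF Mxy Myy Bb Be g0_lin])
      also have "\<dots> = b (r div n)" by (rule Lg0[OF bp])
      finally show ?thesis using True by (simp add: Lv_def mmat_def)
    qed (simp add: Lv_def mmat_def)
  qed
  have R0: "Rv (Lv V0) = mmat (A y y) e b n (Ro (\<lambda>v. v))"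
  proof
    fix r show "Rv (Lv V0) r = mmat (A y y) e b n (Ro (\<lambda>v. v)) r"
    proof (cases "r < n * n")
      case True
      have bp: "b (r div n) \<in> mcarrier (A x y)" using basis_in[OF Bb idx2(1)[OF True]] .
      have "Ro (hV (Lv V0)) (b (r div n)) = Ro (\<lambda>v. v) (b (r div n))"
        by (rule Rop_cong[OF _ bp]) (simp add: L0 vmap_mmat[OF Mxy Mxy Bb Bb klinear_id])
      thus ?thesis using True by (simp add: Rv_def mmat_def)
    qed (simp add: Rv_def mmat_def)
  qed
  have E: "mmat (A y y) e b n (Ro (\<lambda>v. v)) = V0"
  proof
    fix r show "mmat (A y y) e b n (Ro (\<lambda>v. v)) r = V0 r"
    proof (cases "r < n * n")
      case True then show ?thesis using inv[OF True] R0 by simp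
    qed (simp add: V0_def mmat_def)
  qed
  have RL: "klinear (A x y) (A y y) (Ro (\<lambda>v. v))" by (rule Rop_lin[OF klinear_id])
  have "Ro (\<lambda>v. v) a = gV (mmat (A y y) e b n (Ro (\<lambda>v. v))) a"
    by (rule vmap_mmat[OF Mxy Myy Bb Be RL a, symmetric])
  also have "\<dots> = gV V0 a" by (simp add: E)
  also have "\<dots> = ?g0 a" unfolding V0_def by (rule vmap_mmat[OF Mxy Myy Bb Be g0_lin a])
  finally show ?thesis by (simp add: Rop_def)
qed

end


lemma left_zero_case:
  assumes SH: "semi_hopf_category X A m j delta eps" and RA: "right_antipode X A m j delta eps s"
    and xX: "x \<in> X" and yX: "y \<in> X" and Z: "mcarrier (A x y) = {mzero (A x y)}"
    and a: "a \<in> mcarrier (A x y)"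
  shows "msum (A y y) (map (\<lambda>(u, v). m y x y (s x y u) v) (delta x y a)) = msmult (A y y) (eps x y a) (j y)"
proof -
  have Mxy: "is_kmodule (A x y)" and Myy: "is_kmodule (A y y)" and Myx: "is_kmodule (A y x)"
    using sh_mod[OF SH] xX yX by auto
  have C: "coalgebra (A x y) (delta x y) (eps x y)" using sh_coalg[OF SH xX yX] .
  have sl: "klinear (A x y) (A y x) (s x y)"
    using bspec[OF bspec[OF RA[unfolded right_antipode_def] xX] yX] by (rule conjunct1)
  have a0: "a = mzero (A x y)" using a Z by simp
  have s0: "s x y (mzero (A x y)) \<in> mcarrier (A y x)" using sl kmD_1[OF Mxy] unfolding klinear_def by blast
  have "msum (A y y) (map (\<lambda>(u, v). m y x y (s x y u) v) (delta x y a)) = mzero (A y y)"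
  proof (rule msum_zeros[OF Myy], rule ballI)
    fix z assume z: "z \<in> set (delta x y a)"
    obtain u v where zz: "z = (u, v)" by (cases z)
    have "u \<in> mcarrier (A x y)" "v \<in> mcarrier (A x y)" using co_delta_in[OF C a z[unfolded zz]] by auto
    hence "u = mzero (A x y)" "v = mzero (A x y)" using Z by auto
    thus "(\<lambda>(u, v). m y x y (s x y u) v) z = mzero (A y y)"
      using klinear_zero[OF Mxy Myy sh_m_lin2[OF SH yX xX yX s0]] zz by simp
  qed
  also have "\<dots> = msmult (A y y) (eps x y a) (j y)"
    using kfun_zero[OF Mxy co_eps_kfun[OF C]] a0 km_zero_smult[OF Myy sh_j_in[OF SH yX]] by simp
  finally show ?thesis .
qed

theorem mainTheorem9:
  fixes X :: "'x set"
    and A :: "'x \<Rightarrow> 'x \<Rightarrow> ('k::comm_ring_1, 'a) kmod"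
    and m :: "'x \<Rightarrow> 'x \<Rightarrow> 'x \<Rightarrow> 'a \<Rightarrow> 'a \<Rightarrow> 'a"
    and j :: "'x \<Rightarrow> 'a"
    and delta :: "'x \<Rightarrow> 'x \<Rightarrow> 'a \<Rightarrow> ('a \<times> 'a) list"
    and eps :: "'x \<Rightarrow> 'x \<Rightarrow> 'a \<Rightarrow> 'k"
    and s :: "'x \<Rightarrow> 'x \<Rightarrow> 'a \<Rightarrow> 'a"
  assumes "fgp_free_ring TYPE('k)"
    and "semi_hopf_category X A m j delta eps"
    and "\<forall>x\<in>X. \<forall>y\<in>X. fg_projective (A x y)"
    and "\<forall>x\<in>X. \<forall>y\<in>X. mcarrier (A x y) \<noteq> {mzero (A x y)} \<longrightarrow>
           (\<exists>n. has_rank (A x y) n \<and> has_rank (A y y) n)"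
    and "right_antipode X A m j delta eps s"
  shows "left_antipode X A m j delta eps s \<and> is_antipode X A m j delta eps s
         \<and> hopf_category X A m j delta eps"
proof -
  note SH = assms(2) and RA = assms(5) and rk = assms(4)
  have L: "left_antipode X A m j delta eps s"
    unfolding left_antipode_def
  proof (intro ballI conjI)
    fix x y assume xX: "x \<in> X" and yX: "y \<in> X"
    show "klinear (A x y) (A y x) (s x y)"
      using bspec[OF bspec[OF RA[unfolded right_antipode_def] xX] yX] by (rule conjunct1)
    fix a assume a: "a \<in> mcarrier (A x y)"
    show "msum (A y y) (map (\<lambda>(u, v). m y x y (s x y u) v) (delta x y a)) = msmult (A y y) (eps x y a) (j y)"
    proof (cases "mcarrier (A x y) = {mzero (A x y)}")
      case True
      then show ?thesis using left_zero_case[OF SH RA xX yX True a] by simp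
    next
      case False
      then obtain n where "has_rank (A x y) n" "has_rank (A y y) n" using rk xX yX by blast
      then obtain b e where Bb: "is_basis (A x y) b n" and Be: "is_basis (A y y) e n"
        unfolding has_rank_def by blast
      interpret LA X A m j delta eps s x y b e n
        by (unfold_locales) (rule SH, rule RA, rule xX, rule yX, rule Bb, rule Be)
      show ?thesis by (rule left_xy[OF a])
    qed
  qed
  have I: "is_antipode X A m j delta eps s" unfolding is_antipode_def using RA L by simp
  have H: "hopf_category X A m j delta eps" unfolding hopf_category_def using SH I by blast
  show ?thesis using L I H by simp
qed


end
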